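(* Let $n\ge 2k$, let $E$ be a real symmetric $n\times n$ matrix with $E\in\Gamma_k^+$, and let $v\in\mathbb R^n$. Then $$\Big\langle T_{k-1}(E),\ \tfrac12|v|^2 I-v\otimes v\Big\rangle\ \ge\ \frac{(n-2k)(n-k+1)}{2n}\,\sigma_{k-1}(E)\,|v|^2.$$
   Context: $\sigma_j$ is the $j$-th elementary symmetric function of eigenvalues, $\Gamma_k^+=\{S:\sigma_j(S)>0,1\le j\le k\}$, $T_{k-1}(S)=\sum_{i=0}^{k-1}(-1)^i\sigma_{k-1-i}(S)S^i$ is the Newton transformation, and $\langle S_1,S_2\rangle=\mathrm{tr}(S_1S_2)$. *)

theory Defs
  imports "Jordan_Normal_Form.Char_Poly"
begin

definition sym_mat :: "real mat \<Rightarrow> bool" where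
  "sym_mat E \<longleftrightarrow> square_mat E \<and> transpose_mat E = E"

text \<open>For real symmetric matrices such a list exists and is unique up to order.\<close>
definition eigvals :: "real mat \<Rightarrow> real list" where
  "eigvals E = (SOME es. char_poly E = (\<Prod>a\<leftarrow>es. [:- a, 1:]))"

definition esym :: "nat \<Rightarrow> real list \<Rightarrow> real" where
  "esym j xs = (\<Sum>S \<in> {S. S \<subseteq> {0..<length xs} \<and> card S = j}. \<Prod>i\<in>S. xs ! i)"

definition sigma :: "nat \<Rightarrow> real mat \<Rightarrow> real" where
  "sigma j E = esym j (eigvals E)"

definition Gamma_plus :: "nat \<Rightarrow> real mat set" where
  "Gamma_plus k = {S. \<forall>j\<in>{1..k}. sigma j S > 0}"

definition newton_T :: "nat \<Rightarrow> real mat \<Rightarrow> real mat" where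
  "newton_T k S = mat (dim_row S) (dim_col S)
     (\<lambda>(a, b). \<Sum>i<k. (-1) ^ i * sigma (k - 1 - i) S * (S ^\<^sub>m i) $$ (a, b))"

definition mat_trace :: "real mat \<Rightarrow> real" where
  "mat_trace A = (\<Sum>i<dim_row A. A $$ (i, i))"

definition mat_inner :: "real mat \<Rightarrow> real mat \<Rightarrow> real" where
  "mat_inner S1 S2 = mat_trace (S1 * S2)"

definition vtensor :: "real vec \<Rightarrow> real vec \<Rightarrow> real mat" where
  "vtensor v w = mat (dim_vec v) (dim_vec w) (\<lambda>(i, j). v $ i * w $ j)"

end

theory Submission
  imports Defs
begin
definition ES :: "nat set \<Rightarrow> (nat \<Rightarrow> real) \<Rightarrow> nat \<Rightarrow> real" where
  "ES I f j = (\<Sum>S \<in> {S. S \<subseteq> I \<and> card S = j}. \<Prod>i\<in>S. f i)"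
lemma esym_ES: "esym j xs = ES {0..<length xs} (\<lambda>i. xs ! i) j"
  unfolding esym_def ES_def by simp

lemma ES_0: assumes I: "finite I" shows "ES I f 0 = 1"
proof -
  have "{S. S \<subseteq> I \<and> card S = 0} = {{}}"
  proof (rule Set.set_eqI)
    fix S show "S \<in> {S. S \<subseteq> I \<and> card S = 0} \<longleftrightarrow> S \<in> {{}}"
      using rev_finite_subset[OF I, of S] by auto
  qed
  then show ?thesis unfolding ES_def by simp
qed

lemma ES_big: assumes I: "finite I" and j: "card I < j" shows "ES I f j = 0"
proof -
  have e: "{S. S \<subseteq> I \<and> card S = j} = {}"
  proof (rule Set.set_eqI)
    fix S show "S \<in> {S. S \<subseteq> I \<and> card S = j} \<longleftrightarrow> S \<in> {}"
      using card_mono[OF I, of S] j by auto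
  qed
  show ?thesis unfolding ES_def e by (rule sum.empty)
qed

lemma ES_insert:
  assumes I: "finite I" and a: "a \<notin> I"
  shows "ES (insert a I) f (Suc j) = f a * ES I f j + ES I f (Suc j)"
proof -
  let ?A = "{S. S \<subseteq> I \<and> card S = Suc j}"
  let ?B = "{S. S \<subseteq> I \<and> card S = j}"
  have eq: "{S. S \<subseteq> insert a I \<and> card S = Suc j} = ?A \<union> insert a ` ?B"
  proof (rule Set.set_eqI, rule iffI)
    fix S assume S: "S \<in> {S. S \<subseteq> insert a I \<and> card S = Suc j}"
    then have Ss: "S \<subseteq> insert a I" and Sc: "card S = Suc j" by auto
    have fS: "finite S" using rev_finite_subset[OF finite_insert[THEN iffD2, OF I] Ss] .
    show "S \<in> ?A \<union> insert a ` ?B"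
    proof (cases "a \<in> S")
      case True
      then have "S = insert a (S - {a})" by auto
      moreover have "S - {a} \<in> ?B" using Ss Sc True fS by (auto simp: card_Diff_singleton_if)
      ultimately show ?thesis by blast
    next
      case False then show ?thesis using Ss Sc by auto
    qed
  next
    fix S assume S: "S \<in> ?A \<union> insert a ` ?B"
    show "S \<in> {S. S \<subseteq> insert a I \<and> card S = Suc j}"
    proof (cases "S \<in> ?A")
      case True then show ?thesis by auto
    next
      case False
      then obtain T where T: "T \<in> ?B" "S = insert a T" using S by auto
      have "finite T" using rev_finite_subset[OF I] T by auto
      moreover have "a \<notin> T" using T a by auto
      ultimately show ?thesis using T by auto
    qed
  qed
  have disj: "?A \<inter> insert a ` ?B = {}" using a by auto
  have inj: "inj_on (insert a) ?B"
  proof (rule inj_onI)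
    fix x y assume "x \<in> ?B" "y \<in> ?B" "insert a x = insert a y"
    then have "insert a x - {a} = insert a y - {a}" "a \<notin> x" "a \<notin> y" using a by auto
    then show "x = y" by simp
  qed
  have finA: "finite ?A" using I by simp
  have finB: "finite ?B" using I by simp
  have "ES (insert a I) f (Suc j) = (\<Sum>S\<in>?A. \<Prod>i\<in>S. f i) + (\<Sum>S\<in>insert a ` ?B. \<Prod>i\<in>S. f i)"
    unfolding ES_def eq by (rule sum.union_disjoint) (use finA finB disj in auto)
  also have "(\<Sum>S\<in>insert a ` ?B. \<Prod>i\<in>S. f i) = (\<Sum>S\<in>?B. \<Prod>i\<in>insert a S. f i)"
    by (rule sum.reindex[OF inj, unfolded comp_def])
  also have "\<dots> = (\<Sum>S\<in>?B. f a * (\<Prod>i\<in>S. f i))"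
  proof (rule sum.cong[OF refl])
    fix S assume "S \<in> ?B"
    then have "finite S" "a \<notin> S" using rev_finite_subset[OF I] a by auto
    then show "(\<Prod>i\<in>insert a S. f i) = f a * (\<Prod>i\<in>S. f i)" by simp
  qed
  also have "\<dots> = f a * ES I f j" unfolding ES_def by (simp add: sum_distrib_left)
  finally show ?thesis unfolding ES_def by simp
qed

lemma ES_remove:
  assumes I: "finite I" and a: "a \<in> I"
  shows "ES I f (Suc j) = f a * ES (I - {a}) f j + ES (I - {a}) f (Suc j)"
proof -
  have "I = insert a (I - {a})" using a by auto
  then have "ES I f (Suc j) = ES (insert a (I - {a})) f (Suc j)" by simp
  also have "\<dots> = f a * ES (I - {a}) f j + ES (I - {a}) f (Suc j)"
    by (rule ES_insert) (use I in auto)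
  finally show ?thesis .
qed

lemma newton_coeff_identity:
  assumes I: "finite I" and a: "a \<in> I"
  shows "(\<Sum>i<Suc k. (-1)^i * ES I f (k - i) * f a ^ i) = ES (I - {a}) f k"
proof (induction k)
  case 0
  then show ?case using ES_0[OF I] ES_0[of "I - {a}"] I by simp
next
  case (Suc k)
  have "(\<Sum>i<Suc (Suc k). (-1)^i * ES I f (Suc k - i) * f a ^ i)
      = ES I f (Suc k) + (\<Sum>i<Suc k. (-1)^(Suc i) * ES I f (Suc k - Suc i) * f a ^ (Suc i))"
    by (subst sum.lessThan_Suc_shift) simp
  also have "(\<Sum>i<Suc k. (-1)^(Suc i) * ES I f (Suc k - Suc i) * f a ^ (Suc i))
      = - f a * (\<Sum>i<Suc k. (-1)^i * ES I f (k - i) * f a ^ i)"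
    by (simp add: sum_distrib_left algebra_simps)
  also have "\<dots> = - f a * ES (I - {a}) f k" using Suc by simp
  also have "ES I f (Suc k) = f a * ES (I - {a}) f k + ES (I - {a}) f (Suc k)"
    by (rule ES_remove[OF I a])
  finally show ?case by simp
qed

lemma ES_remove_sum:
  assumes I: "finite I"
  shows "(\<Sum>a\<in>I. ES (I - {a}) f j) = (real (card I) - real j) * ES I f j"
  using I
proof (induction I arbitrary: j rule: finite_induct)
  case empty
  then show ?case by (cases j) (auto simp: ES_0 ES_big)
next
  case (insert b I)
  have eqs: "insert b I - {a} = insert b (I - {a})" if "a \<in> I" for a using that insert by auto
  have "(\<Sum>a\<in>insert b I. ES (insert b I - {a}) f j) = ES I f j + (\<Sum>a\<in>I. ES (insert b (I - {a})) f j)"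
    using insert by (simp add: eqs)
  also have "\<dots> = (real (card (insert b I)) - real j) * ES (insert b I) f j"
  proof (cases j)
    case 0
    then show ?thesis using insert by (simp add: ES_0)
  next
    case (Suc j')
    have "(\<Sum>a\<in>I. ES (insert b (I - {a})) f j) = (\<Sum>a\<in>I. f b * ES (I - {a}) f j' + ES (I - {a}) f j)"
      unfolding Suc using insert by (intro sum.cong refl ES_insert) auto
    also have "\<dots> = f b * ((real (card I) - real j') * ES I f j') + (real (card I) - real j) * ES I f j"
      using insert by (simp add: sum.distrib sum_distrib_left[symmetric])
    finally show ?thesis using insert unfolding Suc by (simp add: ES_insert algebra_simps)
  qed
  finally show ?case .
qed

lemma ES_top: assumes I: "finite I" shows "ES I f (card I) = (\<Prod>i\<in>I. f i)"
proof -
  have e: "{S. S \<subseteq> I \<and> card S = card I} = {I}"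
  proof (rule Set.set_eqI)
    fix S show "S \<in> {S. S \<subseteq> I \<and> card S = card I} \<longleftrightarrow> S \<in> {I}"
      using card_subset_eq[OF I, of S] by auto
  qed
  show ?thesis unfolding ES_def e by simp
qed

lemma ES_1: assumes I: "finite I" shows "ES I f 1 = (\<Sum>i\<in>I. f i)"
  using I
proof (induction I rule: finite_induct)
  case empty then show ?case by (simp add: ES_big)
next
  case (insert b I)
  then show ?case using ES_insert[OF insert(1,2), of f 0] ES_0[OF insert(1)] by simp
qed

lemma ES_2: assumes I: "finite I" shows "2 * ES I f 2 = (\<Sum>i\<in>I. f i)^2 - (\<Sum>i\<in>I. (f i)^2)"
  using I
proof (induction I rule: finite_induct)
  case empty then show ?case by (simp add: ES_big)
next
  case (insert b I)
  have "ES (insert b I) f 2 = f b * ES I f 1 + ES I f 2"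
    using ES_insert[OF insert(1,2), of f 1] by (simp add: numeral_2_eq_2)
  then show ?case using insert ES_1[OF insert(1), of f] by (simp add: power2_eq_square algebra_simps)
qed

lemma cauchy_sum: assumes I: "finite I"
  shows "(\<Sum>i\<in>I. (w i::real))^2 \<le> real (card I) * (\<Sum>i\<in>I. (w i)^2)"
proof -
  have "0 \<le> (\<Sum>i\<in>I. \<Sum>j\<in>I. (w i - w j)^2)" by (intro sum_nonneg) auto
  also have "\<dots> = (\<Sum>i\<in>I. \<Sum>j\<in>I. (w i)^2 + (w j)^2 - 2 * w i * w j)"
    by (simp add: power2_diff)
  also have "\<dots> = (\<Sum>i\<in>I. \<Sum>j\<in>I. (w i)^2) + (\<Sum>i\<in>I. \<Sum>j\<in>I. (w j)^2) - (\<Sum>i\<in>I. \<Sum>j\<in>I. 2 * w i * w j)"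
    by (simp add: sum.distrib sum_subtractf)
  also have "(\<Sum>i\<in>I. \<Sum>j\<in>I. (w i)^2) = real (card I) * (\<Sum>i\<in>I. (w i)^2)"
    by (simp add: sum_distrib_left mult.commute)
  also have "(\<Sum>i\<in>I. \<Sum>j\<in>I. (w j)^2) = real (card I) * (\<Sum>i\<in>I. (w i)^2)"
    by simp
  also have "(\<Sum>i\<in>I. \<Sum>j\<in>I. 2 * w i * w j) = 2 * (\<Sum>i\<in>I. w i)^2"
  proof -
    have "(\<Sum>i\<in>I. \<Sum>j\<in>I. 2 * w i * w j) = (\<Sum>i\<in>I. (2 * w i) * (\<Sum>j\<in>I. w j))"
      by (simp add: sum_distrib_left)
    also have "\<dots> = (\<Sum>i\<in>I. 2 * w i) * (\<Sum>j\<in>I. w j)" by (simp add: sum_distrib_right)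
    also have "\<dots> = 2 * (\<Sum>i\<in>I. w i)^2" by (simp add: sum_distrib_left[symmetric] power2_eq_square)
    finally show ?thesis .
  qed
  finally show ?thesis by simp
qed

lemma ES_compl:
  assumes I: "finite I" and nz: "\<forall>i\<in>I. f i \<noteq> 0" and j: "j \<le> card I"
  shows "ES I f (card I - j) = (\<Prod>i\<in>I. f i) * ES I (\<lambda>i. 1 / f i) j"
proof -
  let ?A = "{S. S \<subseteq> I \<and> card S = j}"
  let ?B = "{S. S \<subseteq> I \<and> card S = card I - j}"
  have "ES I (\<lambda>i. 1 / f i) j * (\<Prod>i\<in>I. f i) = (\<Sum>S\<in>?A. (\<Prod>i\<in>S. 1 / f i) * (\<Prod>i\<in>I. f i))"
    unfolding ES_def by (simp add: sum_distrib_right)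
  also have "\<dots> = (\<Sum>S\<in>?B. \<Prod>i\<in>S. f i)"
  proof (rule sum.reindex_bij_witness[of _ "\<lambda>S. I - S" "\<lambda>S. I - S"])
    fix S assume "S \<in> ?A"
    then have S: "S \<subseteq> I" "card S = j" by auto
    show "I - (I - S) = S" using S by auto
    have fS: "finite S" using rev_finite_subset[OF I S(1)] .
    show "I - S \<in> ?B" using S I card_Diff_subset[OF fS S(1)] by auto
    have "(\<Prod>i\<in>I. f i) = (\<Prod>i\<in>I - S. f i) * (\<Prod>i\<in>S. f i)"
      by (rule prod.subset_diff[OF S(1) I])
    moreover have "(\<Prod>i\<in>S. 1 / f i) = 1 / (\<Prod>i\<in>S. f i)"
      using prod_dividef[of "\<lambda>_. 1" f S] by simp
    moreover have "(\<Prod>i\<in>S. f i) \<noteq> 0" using nz S fS by (auto simp: prod_zero_iff)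
    ultimately show "(\<Prod>i\<in>I - S. f i) = (\<Prod>i\<in>S. 1 / f i) * (\<Prod>i\<in>I. f i)" by simp
  next
    fix S assume "S \<in> ?B"
    then have S: "S \<subseteq> I" "card S = card I - j" by auto
    show "I - (I - S) = S" using S by auto
    have "card (I - S) = card I - card S" using card_Diff_subset[OF rev_finite_subset[OF I S(1)] S(1)] .
    then show "I - S \<in> ?A" using S j by auto
  qed
  finally show ?thesis unfolding ES_def by (simp add: mult.commute)
qed

lemma vieta:
  assumes I: "finite I"
  shows "coeff (\<Prod>i\<in>I. [:f i, 1:]) t = (if t \<le> card I then ES I f (card I - t) else 0)"
  using I
proof (induction I arbitrary: t rule: finite_induct)
  case empty
  then show ?case by (cases t) (auto simp: ES_0)
next
  case (insert b I)
  let ?P = "\<Prod>i\<in>I. [:f i, 1:]"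
  let ?c = "card I"
  have "(\<Prod>i\<in>insert b I. [:f i, 1:]) = [:f b, 1:] * ?P" using insert by simp
  also have "\<dots> = Polynomial.smult (f b) ?P + pCons 0 ?P" by (simp add: mult_pCons_left)
  finally have eq: "coeff (\<Prod>i\<in>insert b I. [:f i, 1:]) t = f b * coeff ?P t + coeff (pCons 0 ?P) t"
    by simp
  have cI: "card (insert b I) = Suc ?c" using insert by simp
  show ?case
  proof (cases t)
    case 0
    then show ?thesis using eq insert ES_insert[OF insert(1,2), of f ?c] ES_big[OF insert(1), of "Suc ?c" f]
      by (simp add: cI)
  next
    case (Suc t')
    have cp: "coeff (pCons 0 ?P) t = coeff ?P t'" using Suc by simp
    consider "t' > ?c" | "t' = ?c" | "t' < ?c" by linarith
    then show ?thesis
    proof cases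
      case 1 then show ?thesis using eq cp insert Suc cI by simp
    next
      case 2 then show ?thesis using eq cp insert Suc cI by (simp add: ES_0)
    next
      case 3
      then have e: "?c - t' = Suc (?c - Suc t')" by simp
      show ?thesis using eq cp insert Suc cI 3 ES_insert[OF insert(1,2), of f "?c - Suc t'"]
        by (simp add: e)
    qed
  qed
qed

lemma vieta_degree:
  fixes f :: "nat \<Rightarrow> real"
  assumes I: "finite I"
  shows "degree (\<Prod>i\<in>I. [:f i, 1:]) = card I" "coeff (\<Prod>i\<in>I. [:f i, 1:]) (card I) = 1"
proof -
  show c: "coeff (\<Prod>i\<in>I. [:f i, 1:]) (card I) = 1" using vieta[OF I] ES_0[OF I] by simp
  have "degree (\<Prod>i\<in>I. [:f i, 1:]) \<le> card I"
    by (rule degree_le) (use vieta[OF I] in auto)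
  moreover have "card I \<le> degree (\<Prod>i\<in>I. [:f i, 1:])" by (rule le_degree) (use c in simp)
  ultimately show "degree (\<Prod>i\<in>I. [:f i, 1:]) = card I" by simp
qed

definition RR :: "real poly \<Rightarrow> bool" where
  "RR p \<longleftrightarrow> p = 0 \<or> degree p \<le> (\<Sum>x | poly p x = 0. Polynomial.order x p)"

lemma sum_roots_superset:
  fixes p :: "real poly"
  assumes p: "p \<noteq> 0" and R: "finite R" and sub: "{x. poly p x = 0} \<subseteq> R"
  shows "(\<Sum>x\<in>R. Polynomial.order x p) = (\<Sum>x | poly p x = 0. Polynomial.order x p)"
proof (rule sum.mono_neutral_right[OF R sub])
  show "\<forall>i\<in>R - {x. poly p x = 0}. Polynomial.order i p = 0" using order_0I by blast
qed

lemma order_linear: "Polynomial.order y [:-x, 1::real:] = (if y = x then 1 else 0)"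
proof (cases "y = x")
  case True then show ?thesis using order_power_n_n[of x 1] by simp
next
  case False then show ?thesis by (auto intro!: order_0I)
qed

lemma RR_mult:
  assumes "RR p" "RR q" shows "RR (p * q)"
proof (cases "p = 0 \<or> q = 0")
  case True then show ?thesis by (auto simp: RR_def)
next
  case False
  then have p: "p \<noteq> 0" and q: "q \<noteq> 0" by auto
  have dp: "degree p \<le> (\<Sum>x | poly p x = 0. Polynomial.order x p)" using assms(1) p by (simp add: RR_def)
  have dq: "degree q \<le> (\<Sum>x | poly q x = 0. Polynomial.order x q)" using assms(2) q by (simp add: RR_def)
  let ?R = "{x. poly (p * q) x = 0}"
  have fR: "finite ?R" using p q by (intro poly_roots_finite) simp
  have "(\<Sum>x\<in>?R. Polynomial.order x (p * q)) = (\<Sum>x\<in>?R. Polynomial.order x p) + (\<Sum>x\<in>?R. Polynomial.order x q)"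
    using p q by (simp add: order_mult sum.distrib)
  also have "(\<Sum>x\<in>?R. Polynomial.order x p) = (\<Sum>x | poly p x = 0. Polynomial.order x p)"
    by (rule sum_roots_superset[OF p fR]) auto
  also have "(\<Sum>x\<in>?R. Polynomial.order x q) = (\<Sum>x | poly q x = 0. Polynomial.order x q)"
    by (rule sum_roots_superset[OF q fR]) auto
  finally have "degree (p * q) \<le> (\<Sum>x\<in>?R. Polynomial.order x (p * q))"
    using dp dq p q by (simp add: degree_mult_eq)
  then show ?thesis unfolding RR_def by simp
qed

lemma RR_lin: "RR [:z, 1:]"
proof -
  have e: "{x. poly [:z, 1:] x = 0} = {-z}" by auto
  have "[:z, 1::real:] = [:-(-z), 1:]" by simp
  then have "Polynomial.order (-z) [:z, 1:] = 1" using order_linear[of "-z" "-z"] by simp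
  then show ?thesis unfolding RR_def e by simp
qed

lemma RR_prodset: "finite I \<Longrightarrow> RR (\<Prod>i\<in>I. [:f i, 1:])"
proof (induction I rule: finite_induct)
  case empty then show ?case by (simp add: RR_def)
next
  case (insert b I) then show ?case
    by (simp only: prod.insert[OF insert(1,2)]) (intro RR_mult RR_lin insert.IH)
qed

lemma RR_split:
  fixes p :: "real poly"
  assumes "p \<noteq> 0" "RR p"
  shows "\<exists>(N::nat) (g::nat\<Rightarrow>real). p = Polynomial.smult (lead_coeff p) (\<Prod>i<N. [:g i, 1:])"
  using assms
proof (induction "degree p" arbitrary: p rule: less_induct)
  case (less p)
  have dp: "degree p \<le> (\<Sum>x | poly p x = 0. Polynomial.order x p)" using less.prems by (simp add: RR_def)
  show ?case
  proof (cases "\<exists>x. poly p x = 0")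
    case False
    then have "{x. poly p x = 0} = {}" by auto
    then have "degree p = 0" using dp by simp
    have e1: "(\<Prod>i<(0::nat). [:(\<lambda>_. 0::real) i, 1:]) = (1::real poly)" by (simp only: lessThan_0 prod.empty)
    have e2: "Polynomial.smult c 1 = [:c:]" for c :: real by simp
    have "p = Polynomial.smult (lead_coeff p) (\<Prod>i<(0::nat). [:(\<lambda>_. 0::real) i, 1:])"
      unfolding e1 e2 using degree_0_id[of p] \<open>degree p = 0\<close> by simp
    then show ?thesis by (rule_tac x=0 in exI, rule_tac x="\<lambda>_. 0" in exI)
  next
    case True
    then obtain x where x: "poly p x = 0" by auto
    then obtain q where pq: "p = [:-x, 1:] * q" by (metis dvd_def poly_eq_0_iff_dvd)
    have q: "q \<noteq> 0" using pq less.prems by auto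
    have "degree ([:-x, 1:] * q) = degree [:-x, 1::real:] + degree q" by (rule degree_mult_eq) (use q in auto)
    then have degp: "degree p = Suc (degree q)" using pq by simp
    have ordp: "Polynomial.order y p = (if y = x then 1 else 0) + Polynomial.order y q" for y
    proof -
      have "Polynomial.order y ([:-x, 1:] * q) = Polynomial.order y [:-x, 1:] + Polynomial.order y q"
        by (rule order_mult) (use q in \<open>metis mult_eq_0_iff pCons_eq_0_iff zero_neq_one\<close>)
      then show ?thesis unfolding order_linear pq .
    qed
    let ?R = "{y. poly p y = 0}"
    have fR: "finite ?R" using less.prems by (intro poly_roots_finite) simp
    have "(\<Sum>y\<in>?R. Polynomial.order y p) = (\<Sum>y\<in>?R. (if y = x then 1 else 0)) + (\<Sum>y\<in>?R. Polynomial.order y q)"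
      by (simp add: ordp sum.distrib)
    also have "(\<Sum>y\<in>?R. (if y = x then 1 else 0)) = (1::nat)" using x fR by (simp add: sum.delta)
    also have "(\<Sum>y\<in>?R. Polynomial.order y q) = (\<Sum>y | poly q y = 0. Polynomial.order y q)"
      by (rule sum_roots_superset[OF q fR]) (auto simp: pq)
    finally have "degree q \<le> (\<Sum>y | poly q y = 0. Polynomial.order y q)" using dp degp by simp
    then have "RR q" by (simp add: RR_def)
    then obtain N :: nat and g :: "nat \<Rightarrow> real" where g: "q = Polynomial.smult (lead_coeff q) (\<Prod>i<N. [:g i, 1:])"
      using less.hyps[of q] q degp by auto
    let ?g = "g(N := -x)"
    have P: "(\<Prod>i<Suc N. [:?g i, 1:]) = (\<Prod>i<N. [:g i, 1:]) * [:-x, 1:]"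
      by (simp add: prod.lessThan_Suc)
    define c where "c = lead_coeff q"
    have L: "lead_coeff p = c" unfolding pq lead_coeff_mult c_def by simp
    have g': "q = Polynomial.smult c (\<Prod>i<N. [:g i, 1:])" using g unfolding c_def .
    have "p = [:-x, 1:] * Polynomial.smult c (\<Prod>i<N. [:g i, 1:])" using pq g' by metis
    also have "\<dots> = Polynomial.smult c (\<Prod>i<N. [:g i, 1:]) * [:-x, 1:]" by (rule mult.commute)
    also have "\<dots> = Polynomial.smult c ((\<Prod>i<N. [:g i, 1:]) * [:-x, 1:])" by (rule mult_smult_left)
    finally have "p = Polynomial.smult (lead_coeff p) (\<Prod>i<Suc N. [:?g i, 1:])" unfolding L P .
    then show ?thesis by blast
  qed
qed


lemma RR_pderiv:
  fixes p :: "real poly"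
  assumes RRp: "RR p" shows "RR (pderiv p)"
proof (cases "p = 0 \<or> degree p = 0")
  case True then have "pderiv p = 0" by (metis pderiv_0 pderiv_eq_0_iff)
  then show ?thesis by (simp add: RR_def)
next
  case False
  then have p: "p \<noteq> 0" and dp1: "degree p \<ge> 1" by auto
  let ?p' = "pderiv p"
  have p': "?p' \<noteq> 0"
  proof
    assume "?p' = 0" then have "degree p = 0" by (metis pderiv_eq_0_iff)
    with dp1 show False by simp
  qed
  define R where "R = {x. poly p x = 0}"
  have fR: "finite R" unfolding R_def using p by (intro poly_roots_finite)
  have dp: "degree p \<le> (\<Sum>x\<in>R. Polynomial.order x p)" using RRp p unfolding RR_def R_def by simp
  have Rne: "R \<noteq> {}" using dp dp1 by auto
  define nxt where "nxt a = Min {b\<in>R. a < b}" for a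
  have nxt: "nxt a \<in> R \<and> a < nxt a \<and> (\<forall>b\<in>R. a < b \<longrightarrow> nxt a \<le> b)" if a: "a \<in> R - {Max R}" for a
  proof -
    have "a \<le> Max R" using a fR by auto
    then have "a < Max R" using a by auto
    then have ne: "{b\<in>R. a < b} \<noteq> {}" using Max_in[OF fR Rne] by auto
    have fin: "finite {b\<in>R. a < b}" using fR by auto
    show ?thesis unfolding nxt_def using Min_in[OF fin ne] Min_le[OF fin] by auto
  qed
  have "\<forall>a\<in>R - {Max R}. \<exists>y. a < y \<and> y < nxt a \<and> poly ?p' y = 0"
  proof
    fix a assume a: "a \<in> R - {Max R}"
    from nxt[OF a] have lt: "a < nxt a" and nR: "nxt a \<in> R" by auto
    obtain y where y: "a < y" "y < nxt a" "poly p (nxt a) - poly p a = (nxt a - a) * poly ?p' y"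
      using poly_MVT[OF lt, of p] by blast
    have "poly p (nxt a) = 0" "poly p a = 0" using nR a unfolding R_def by auto
    then have "poly ?p' y = 0" using y lt by simp
    then show "\<exists>y. a < y \<and> y < nxt a \<and> poly ?p' y = 0" using y by blast
  qed
  then obtain bf where bf0: "\<forall>a\<in>R - {Max R}. a < bf a \<and> bf a < nxt a \<and> poly ?p' (bf a) = 0"
    using bchoice by metis
  have bf: "a < bf a \<and> bf a < nxt a \<and> poly ?p' (bf a) = 0" if "a \<in> R - {Max R}" for a
    using bf0 that by blast
  define B where "B = bf ` (R - {Max R})"
  have lt2: "bf a < bf a'" if "a \<in> R - {Max R}" "a' \<in> R - {Max R}" "a < a'" for a a'
  proof -
    have "bf a < nxt a" using bf[OF that(1)] by simp
    also have "nxt a \<le> a'" using nxt[OF that(1)] that(2,3) by auto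
    also have "a' < bf a'" using bf[OF that(2)] by simp
    finally show ?thesis .
  qed
  have inj: "inj_on bf (R - {Max R})"
  proof (rule inj_onI)
    fix a a' assume aa: "a \<in> R - {Max R}" "a' \<in> R - {Max R}" "bf a = bf a'"
    show "a = a'"
    proof (rule ccontr)
      assume "a \<noteq> a'"
      then consider "a < a'" | "a' < a" by linarith
      then show False using lt2[OF aa(1,2)] lt2[OF aa(2,1)] aa(3) by cases auto
    qed
  qed
  have cB: "card B = card R - 1"
  proof -
    have "card B = card (R - {Max R})" unfolding B_def by (rule card_image[OF inj])
    also have "\<dots> = card R - 1" by (rule card_Diff_singleton[OF Max_in[OF fR Rne]])
    finally show ?thesis .
  qed
  have fB: "finite B" unfolding B_def using fR by simp
  have disj: "R \<inter> B = {}"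
  proof (rule ccontr)
    assume "R \<inter> B \<noteq> {}"
    then obtain z where z: "z \<in> R" "z \<in> B" by blast
    then obtain a where a: "a \<in> R - {Max R}" "z = bf a" unfolding B_def by blast
    have bfa: "a < bf a" "bf a < nxt a" using bf[OF a(1)] by auto
    have "nxt a \<le> bf a" using nxt[OF a(1)] bfa(1) z(1) a(2) by blast
    then show False using bfa(2) by simp
  qed
  have Broots: "B \<subseteq> {x. poly ?p' x = 0}" unfolding B_def using bf by auto
  let ?R' = "{x. poly ?p' x = 0}"
  have fR': "finite ?R'" using p' by (intro poly_roots_finite)
  have "(\<Sum>x\<in>R. Polynomial.order x ?p') + (\<Sum>x\<in>B. Polynomial.order x ?p') = (\<Sum>x\<in>R \<union> B. Polynomial.order x ?p')"
    by (rule sum.union_disjoint[symmetric]) (use fR fB disj in auto)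
  also have "\<dots> \<le> (\<Sum>x\<in>?R' \<union> R. Polynomial.order x ?p')"
    by (rule sum_mono2) (use fR fR' Broots in auto)
  also have "\<dots> = (\<Sum>x\<in>?R'. Polynomial.order x ?p')"
    by (rule sum_roots_superset[OF p']) (use fR fR' in auto)
  finally have s1: "(\<Sum>x\<in>R. Polynomial.order x ?p') + (\<Sum>x\<in>B. Polynomial.order x ?p') \<le> (\<Sum>x\<in>?R'. Polynomial.order x ?p')" .
  have "card B = (\<Sum>x\<in>B. 1)" by simp
  also have "\<dots> \<le> (\<Sum>x\<in>B. Polynomial.order x ?p')"
  proof (rule sum_mono)
    fix x assume "x \<in> B" then have "poly ?p' x = 0" using Broots by auto
    then have "Polynomial.order x ?p' > 0" using order_gt_0_iff[OF p'] by blast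
    then show "1 \<le> Polynomial.order x ?p'" by simp
  qed
  finally have s2: "card B \<le> (\<Sum>x\<in>B. Polynomial.order x ?p')" .
  have "(\<Sum>x\<in>R. Polynomial.order x p) = (\<Sum>x\<in>R. Suc (Polynomial.order x ?p'))"
  proof (rule sum.cong[OF refl])
    fix x assume "x \<in> R" then have "poly p x = 0" unfolding R_def by simp
    then show "Polynomial.order x p = Suc (Polynomial.order x ?p')" by (rule order_pderiv[OF p])
  qed
  also have "\<dots> = (\<Sum>x\<in>R. Polynomial.order x ?p') + card R" by (rule sum_Suc)
  finally have s3: "(\<Sum>x\<in>R. Polynomial.order x p) = (\<Sum>x\<in>R. Polynomial.order x ?p') + card R" .
  have cR: "card R \<ge> 1" using fR Rne by (simp add: Suc_le_eq card_gt_0_iff)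
  have "degree ?p' = degree p - 1" by (rule degree_pderiv)
  then have "degree ?p' \<le> (\<Sum>x\<in>?R'. Polynomial.order x ?p')" using s1 s2 s3 cB dp cR by linarith
  then show ?thesis unfolding RR_def by simp
qed

lemma newton_reduce:
  assumes I: "finite I" and m: "card I = m" and m2: "m \<ge> 2"
  shows "\<exists>(J::nat set) (g::nat \<Rightarrow> real). finite J \<and> card J = m - 1 \<and>
     (\<forall>j. j \<le> m - 1 \<longrightarrow> real m * ES J g j = (real m - real j) * ES I f j)"
proof -
  define P where "P = (\<Prod>i\<in>I. [:f i, 1:])"
  have RRP: "RR (pderiv P)" unfolding P_def by (intro RR_pderiv RR_prodset I)
  have degP: "degree P = m" unfolding P_def using vieta_degree[OF I, of f] m by simp
  have cP: "coeff P t = (if t \<le> m then ES I f (m - t) else 0)" for t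
    unfolding P_def using vieta[OF I, of f t] m by simp
  have degP': "degree (pderiv P) = m - 1" using degP by (simp add: degree_pderiv)
  have lc: "lead_coeff (pderiv P) = real m"
    unfolding degP' coeff_pderiv using m2 cP[of m] ES_0[OF I] by simp
  have P'0: "pderiv P \<noteq> 0" using lc m2 by auto
  obtain N :: nat and g :: "nat \<Rightarrow> real" where
    spl: "pderiv P = Polynomial.smult (lead_coeff (pderiv P)) (\<Prod>i<N. [:g i, 1:])"
    using RR_split[OF P'0 RRP] by blast
  define Q where "Q = (\<Prod>i\<in>{..<N}. [:g i, 1:])"
  have spl': "pderiv P = Polynomial.smult (real m) Q" using spl unfolding lc Q_def .
  have degQ: "degree Q = N" unfolding Q_def using vieta_degree[of "{..<N}" g] by simp
  have N: "N = m - 1" using degP' spl' degQ m2 by simp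
  have cQ: "coeff Q t = (if t \<le> N then ES {..<N} g (N - t) else 0)" for t
    unfolding Q_def using vieta[of "{..<N}" g t] by simp
  show ?thesis
  proof (intro exI conjI allI impI)
    show "finite {..<N}" by simp
    show "card {..<N} = m - 1" using N by simp
    fix j assume j: "j \<le> m - 1"
    define t where "t = m - 1 - j"
    have "coeff (pderiv P) t = real (Suc t) * coeff P (Suc t)" by (rule coeff_pderiv)
    also have "Suc t = m - j" unfolding t_def using j m2 by simp
    also have "coeff P (m - j) = ES I f j" using cP[of "m - j"] j m2 by simp
    finally have e1: "coeff (pderiv P) t = real (m - j) * ES I f j" .
    have tN: "t \<le> N" "N - t = j" using N j t_def m2 by auto
    have e2: "coeff (pderiv P) t = real m * ES {..<N} g j"
      unfolding spl' coeff_smult cQ using tN by simp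
    have "real (m - j) = real m - real j" using j m2 by simp
    then show "real m * ES {..<N} g j = (real m - real j) * ES I f j" using e1 e2 by simp
  qed
qed


lemma newton_top:
  assumes I: "finite I" and c: "card I = Suc r" and r: "r \<ge> 1"
  shows "(real r + 1) * 2 * ES I f (r - 1) * ES I f (Suc r) \<le> real r * (ES I f r)^2"
proof (cases "\<exists>i\<in>I. f i = 0")
  case True
  then have "ES I f (Suc r) = 0" using ES_top[OF I, of f] c I by (simp add: prod_zero_iff)
  then show ?thesis by simp
next
  case False
  then have nz: "\<forall>i\<in>I. f i \<noteq> 0" by auto
  define w where "w i = 1 / f i" for i
  define P where "P = (\<Prod>i\<in>I. f i)"
  define e1 where "e1 = ES I w 1"
  define e2 where "e2 = ES I w 2"
  define q where "q = (\<Sum>i\<in>I. (w i)^2)"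
  have hb: "ES I f r = P * e1"
    using ES_compl[OF I nz, of 1] c unfolding P_def e1_def w_def by simp
  have ha: "ES I f (r - 1) = P * e2"
    using ES_compl[OF I nz, of 2] c r unfolding P_def e2_def w_def by (simp add: numeral_2_eq_2)
  have hc: "ES I f (Suc r) = P" using ES_top[OF I, of f] c unfolding P_def by simp
  have h2: "2 * e2 = e1^2 - q" unfolding e1_def e2_def q_def using ES_2[OF I, of w] ES_1[OF I, of w] by simp
  have cs: "e1^2 \<le> (real r + 1) * q" unfolding e1_def q_def ES_1[OF I] using cauchy_sum[OF I, of w] c by (simp add: add.commute)
  have "real r * (ES I f r)^2 - (real r + 1) * 2 * ES I f (r - 1) * ES I f (Suc r)
      = P^2 * ((real r + 1) * q - e1^2)"
  proof -
    have "real r * (ES I f r)^2 - (real r + 1) * 2 * ES I f (r - 1) * ES I f (Suc r)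
        = P^2 * (real r * e1^2 - (real r + 1) * (2 * e2))"
      unfolding ha hb hc by (simp add: power2_eq_square algebra_simps)
    also have "\<dots> = P^2 * ((real r + 1) * q - e1^2)" unfolding h2 by (simp add: algebra_simps)
    finally show ?thesis .
  qed
  also have "\<dots> \<ge> 0" using cs by simp
  finally show ?thesis by simp
qed

lemma newton:
  assumes I: "finite I" and r: "1 \<le> r" "r < card I"
  shows "(real r + 1) * (real (card I) - real r + 1) * ES I f (r - 1) * ES I f (Suc r)
         \<le> real r * (real (card I) - real r) * (ES I f r)^2"
  using I r
proof (induction "card I" arbitrary: I f rule: less_induct)
  case (less I f)
  define m where "m = card I"
  show ?case
  proof (cases "Suc r = m")
    case True
    then have cI: "real (card I) = real r + 1" using m_def by simp
    have "(real r + 1) * 2 * ES I f (r - 1) * ES I f (Suc r) \<le> real r * (ES I f r)^2"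
      using newton_top[OF less.prems(1), of r f] True less.prems m_def by simp
    then show ?thesis unfolding cI by (simp add: algebra_simps)
  next
    case False
    then have m: "Suc r < m" "m \<ge> 2" using less.prems m_def by auto
    obtain J :: "nat set" and g where J: "finite J" "card J = m - 1"
      and gj: "\<And>j. j \<le> m - 1 \<Longrightarrow> real m * ES J g j = (real m - real j) * ES I f j"
      using newton_reduce[OF less.prems(1) m_def[symmetric] m(2), of f] by blast
    have IH: "(real r + 1) * (real (card J) - real r + 1) * ES J g (r - 1) * ES J g (Suc r)
         \<le> real r * (real (card J) - real r) * (ES J g r)^2"
      by (rule less.hyps) (use J m m_def less.prems in auto)
    define M where "M = real m"
    define R where "R = real r"
    define a where "a = ES I f (r - 1)"
    define b where "b = ES I f r"
    define c where "c = ES I f (Suc r)"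
    define ga where "ga = ES J g (r - 1)"
    define gb where "gb = ES J g r"
    define gc where "gc = ES J g (Suc r)"
    have ha: "M * ga = (M - R + 1) * a" unfolding M_def R_def a_def ga_def
      using gj[of "r - 1"] m less.prems by (simp add: of_nat_diff)
    have hb: "M * gb = (M - R) * b" unfolding M_def R_def b_def gb_def
      using gj[of r] m by simp
    have hc: "M * gc = (M - R - 1) * c" unfolding M_def R_def c_def gc_def
      using gj[of "Suc r"] m by simp
    have cJ: "real (card J) = M - 1" unfolding M_def using J m by (simp add: of_nat_diff)
    have IH': "(R + 1) * (M - R) * ga * gc \<le> R * (M - 1 - R) * gb^2"
      using IH unfolding cJ R_def ga_def gb_def gc_def by (simp add: algebra_simps)
    have "M^2 * ((R + 1) * (M - R) * ga * gc) \<le> M^2 * (R * (M - 1 - R) * gb^2)"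
      by (rule mult_left_mono[OF IH']) simp
    moreover have "M^2 * ((R + 1) * (M - R) * ga * gc) = ((M - R) * (M - R - 1)) * ((R + 1) * (M - R + 1) * a * c)"
    proof -
      have "M^2 * ((R + 1) * (M - R) * ga * gc) = (R + 1) * (M - R) * ((M * ga) * (M * gc))"
        by (simp add: power2_eq_square algebra_simps)
      also have "\<dots> = (R + 1) * (M - R) * (((M - R + 1) * a) * ((M - R - 1) * c))" unfolding ha hc ..
      also have "\<dots> = ((M - R) * (M - R - 1)) * ((R + 1) * (M - R + 1) * a * c)" by (simp add: algebra_simps)
      finally show ?thesis .
    qed
    moreover have "M^2 * (R * (M - 1 - R) * gb^2) = ((M - R) * (M - R - 1)) * (R * (M - R) * b^2)"
    proof -
      have "M^2 * (R * (M - 1 - R) * gb^2) = R * (M - 1 - R) * ((M * gb) * (M * gb))"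
        by (simp add: power2_eq_square algebra_simps)
      also have "\<dots> = R * (M - 1 - R) * (((M - R) * b) * ((M - R) * b))" unfolding hb ..
      also have "\<dots> = ((M - R) * (M - R - 1)) * (R * (M - R) * b^2)" by (simp add: power2_eq_square algebra_simps)
      finally show ?thesis .
    qed
    ultimately have "((M - R) * (M - R - 1)) * ((R + 1) * (M - R + 1) * a * c) \<le> ((M - R) * (M - R - 1)) * (R * (M - R) * b^2)"
      by simp
    moreover have "(M - R) * (M - R - 1) > 0" unfolding M_def R_def using m by simp
    ultimately have "(R + 1) * (M - R + 1) * a * c \<le> R * (M - R) * b^2"
      using mult_le_cancel_left_pos by blast
    then show ?thesis unfolding M_def R_def a_def b_def c_def m_def .
  qed
qed

lemma cone_remove:
  assumes I: "finite I" and a: "a \<in> I" and pos: "\<And>j. 1 \<le> j \<Longrightarrow> j \<le> k \<Longrightarrow> ES I f j > 0"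
  shows "j < k \<Longrightarrow> ES (I - {a}) f j > 0"
proof (induction j)
  case 0
  then show ?case using ES_0[of "I - {a}"] I by simp
next
  case (Suc j)
  define I' where "I' = I - {a}"
  have fI': "finite I'" unfolding I'_def using I by simp
  define x where "x = f a"
  define A where "A = ES I' f j"
  define B where "B = ES I' f (Suc j)"
  define C where "C = ES I' f (Suc (Suc j))"
  have A: "A > 0" unfolding A_def I'_def using Suc by simp
  have e1: "x * A + B > 0" using pos[of "Suc j"] Suc.prems ES_remove[OF I a, of f j]
    unfolding x_def A_def B_def I'_def by simp
  have e2: "x * B + C > 0" using pos[of "Suc (Suc j)"] Suc.prems ES_remove[OF I a, of f "Suc j"]
    unfolding x_def B_def C_def I'_def by simp
  show ?case
  proof (rule ccontr)
    assume "\<not> ES (I - {a}) f (Suc j) > 0"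
    then have B: "B \<le> 0" unfolding B_def I'_def by simp
    have xA: "x * A > - B" using e1 by simp
    then have x: "x > 0" using A B by (metis mult_le_0_iff neg_0_le_iff_le not_le order_less_le_trans less_le_not_le)
    have Cx: "C > x * (- B)" using e2 by simp
    show False
    proof (cases "Suc j < card I'")
      case False
      then have "C = 0" unfolding C_def using ES_big[OF fI'] by simp
      moreover have "x * (- B) \<ge> 0" using x B by (simp add: mult_nonneg_nonpos)
      ultimately show False using Cx by linarith
    next
      case True
      have N: "(real (Suc j) + 1) * (real (card I') - real (Suc j) + 1) * A * C
         \<le> real (Suc j) * (real (card I') - real (Suc j)) * B^2"
        using newton[OF fI', of "Suc j" f] True unfolding A_def B_def C_def by simp
      define \<alpha> where "\<alpha> = (real (Suc j) + 1) * (real (card I') - real (Suc j) + 1)"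
      define \<beta> where "\<beta> = real (Suc j) * (real (card I') - real (Suc j))"
      have d: "\<alpha> - \<beta> = real (card I') + 1" unfolding \<alpha>_def \<beta>_def by (simp add: algebra_simps)
      have cr: "real (card I') - real (Suc j) \<ge> 0" using True by simp
      have b0: "\<beta> \<ge> 0" unfolding \<beta>_def using cr by simp
      have ab: "\<beta> \<le> \<alpha>" "\<alpha> > 0" "\<beta> \<ge> 0" using d b0 by auto
      have "A * C > A * (x * (- B))" by (rule mult_strict_left_mono[OF Cx A])
      moreover have "A * (x * (- B)) = (x * A) * (- B)" by simp
      moreover have "(x * A) * (- B) \<ge> (- B) * (- B)" using xA B by (intro mult_right_mono) auto
      ultimately have AC: "A * C > B^2" by (simp add: power2_eq_square algebra_simps)
      have "\<beta> * B^2 \<le> \<alpha> * B^2" using ab by (intro mult_right_mono) auto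
      also have "\<dots> < \<alpha> * (A * C)" using AC ab by simp
      finally have "\<beta> * B^2 < \<alpha> * (A * C)" .
      moreover have "\<alpha> * (A * C) \<le> \<beta> * B^2" using N unfolding \<alpha>_def \<beta>_def by (simp add: mult.assoc)
      ultimately show False by simp
    qed
  qed
qed

lemma main_ineq:
  assumes I: "finite I" and a: "a \<in> I" and k: "2 \<le> k" "2 * k \<le> card I"
    and pos: "\<And>j. 1 \<le> j \<Longrightarrow> j \<le> k \<Longrightarrow> ES I f j > 0"
  shows "real (card I) * ES (I - {a}) f (k - 1) \<le> real k * (real (card I) - real k + 1) * ES I f (k - 1)"
proof -
  obtain j where kj: "k = Suc (Suc j)" using k by (metis add_2_eq_Suc le_Suc_ex)
  define n where "n = card I"
  define I' where "I' = I - {a}"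
  have fI': "finite I'" unfolding I'_def using I by simp
  have cI': "card I' = n - 1" unfolding I'_def n_def using I a by simp
  define x where "x = f a"
  define A where "A = ES I' f j"
  define B where "B = ES I' f (Suc j)"
  define C where "C = ES I' f (Suc (Suc j))"
  have jk: "j < k" using kj by simp
  have A: "A > 0" unfolding A_def I'_def using cone_remove[OF I a pos jk] .
  have e1: "ES I f (k - 1) = x * A + B" using ES_remove[OF I a, of f j] kj
    unfolding x_def A_def B_def I'_def by simp
  have e1p: "x * A + B > 0" using pos[of "k - 1"] e1 kj by simp
  have e2: "x * B + C > 0" using pos[of k] ES_remove[OF I a, of f "Suc j"] kj
    unfolding x_def B_def C_def I'_def by simp
  have lt: "Suc j < card I'" using k kj cI' n_def by simp
  have N: "(real (Suc j) + 1) * (real (card I') - real (Suc j) + 1) * A * C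
         \<le> real (Suc j) * (real (card I') - real (Suc j)) * B^2"
    using newton[OF fI', of "Suc j" f] lt unfolding A_def B_def C_def by simp
  define \<alpha> where "\<alpha> = real k * (real n - real k + 1)"
  define \<beta> where "\<beta> = (real k - 1) * (real n - real k)"
  have rc: "real (card I') = real n - 1" using cI' lt by (simp add: of_nat_diff)
  have N': "\<alpha> * (A * C) \<le> \<beta> * B^2"
    using N unfolding \<alpha>_def \<beta>_def rc kj by (simp add: algebra_simps)
  have ab: "\<alpha> - \<beta> = real n" unfolding \<alpha>_def \<beta>_def by (simp add: algebra_simps)
  have apos: "\<alpha> > 0" unfolding \<alpha>_def using k n_def by simp
  have key: "0 \<le> \<alpha> * x * A + \<beta> * B"
  proof (rule ccontr)
    assume neg: "\<not> 0 \<le> \<alpha> * x * A + \<beta> * B"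
    have aA: "\<alpha> * A > 0" using apos A by simp
    have "C > - x * B" using e2 by simp
    then have "\<alpha> * A * C > \<alpha> * A * (- x * B)" by (rule mult_strict_left_mono[OF _ aA])
    then have "\<beta> * B^2 > \<alpha> * A * (- x * B)" using N' by (simp add: mult.assoc)
    then have pr: "B * (\<beta> * B + \<alpha> * x * A) > 0" by (simp add: power2_eq_square algebra_simps)
    have Bn: "B < 0"
    proof (rule ccontr)
      assume "\<not> B < 0"
      then have "B \<ge> 0" by simp
      moreover have "\<beta> * B + \<alpha> * x * A < 0" using neg by simp
      ultimately have "B * (\<beta> * B + \<alpha> * x * A) \<le> 0" by (simp add: mult_nonneg_nonpos)
      then show False using pr by simp
    qed
    have "x * A > - B" using e1p by simp
    then have "\<alpha> * (x * A) > \<alpha> * (- B)" by (rule mult_strict_left_mono[OF _ apos])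
    then have h1: "\<alpha> * x * A + \<beta> * B > (\<beta> - \<alpha>) * B" by (simp add: algebra_simps)
    have h2: "(\<beta> - \<alpha>) * B = - real n * B" using ab by (metis minus_diff_eq mult_minus_left)
    have h3: "- real n * B \<ge> 0" using Bn by (simp add: mult_nonneg_nonpos)
    show False using h1 h2 h3 neg by linarith
  qed
  have "real n * B \<le> \<alpha> * (x * A + B)" using key ab by (simp add: algebra_simps)
  then have fin: "real n * B \<le> \<alpha> * ES I f (k - 1)" unfolding e1 .
  have "B = ES (I - {a}) f (k - 1)" unfolding B_def I'_def using kj by simp
  then show ?thesis using fin unfolding n_def \<alpha>_def by simp
qed

lemma sym_real_eigenvalue_real:
  fixes E :: "real mat"
  assumes E: "E \<in> carrier_mat n n" and sym: "transpose_mat E = E"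
    and ev: "eigenvalue (map_mat complex_of_real E) a"
  shows "Im a = 0"
proof -
  let ?C = "map_mat complex_of_real E"
  obtain v where v: "eigenvector ?C v a" using ev unfolding eigenvalue_def by blast
  have vc: "v \<in> carrier_vec n" and v0: "v \<noteq> 0\<^sub>v n" and Cv: "?C *\<^sub>v v = a \<cdot>\<^sub>v v"
    using v E unfolding eigenvector_def by auto
  have Esym: "E $$ (i, j) = E $$ (j, i)" if "i < n" "j < n" for i j
    using sym that E by (metis carrier_matD index_transpose_mat(1))
  have Cvi: "(\<Sum>j<n. complex_of_real (E $$ (i, j)) * v $ j) = a * v $ i" if i: "i < n" for i
  proof -
    have "(?C *\<^sub>v v) $ i = a * v $ i" using Cv i vc by simp
    moreover have "(?C *\<^sub>v v) $ i = (\<Sum>j<n. complex_of_real (E $$ (i, j)) * v $ j)"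
      using i E vc by (simp add: mult_mat_vec_def scalar_prod_def row_def lessThan_atLeast0)
    ultimately show ?thesis by simp
  qed
  define q where "q = (\<Sum>i<n. \<Sum>j<n. cnj (v $ i) * complex_of_real (E $$ (i, j)) * v $ j)"
  define N where "N = (\<Sum>i<n. cnj (v $ i) * v $ i)"
  have qN: "q = a * N"
  proof -
    have "q = (\<Sum>i<n. cnj (v $ i) * (\<Sum>j<n. complex_of_real (E $$ (i, j)) * v $ j))"
      unfolding q_def by (simp add: sum_distrib_left mult.assoc)
    also have "\<dots> = (\<Sum>i<n. cnj (v $ i) * (a * v $ i))" by (rule sum.cong[OF refl]) (simp add: Cvi)
    also have "\<dots> = a * N" unfolding N_def by (simp add: sum_distrib_left algebra_simps)
    finally show ?thesis .
  qed
  have "cnj q = (\<Sum>i<n. \<Sum>j<n. v $ i * complex_of_real (E $$ (i, j)) * cnj (v $ j))"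
    unfolding q_def by simp
  also have "\<dots> = (\<Sum>j<n. \<Sum>i<n. v $ i * complex_of_real (E $$ (i, j)) * cnj (v $ j))"
    by (rule sum.swap)
  also have "\<dots> = q" unfolding q_def
    by (intro sum.cong refl) (simp add: Esym mult.commute mult.left_commute)
  finally have "cnj q = q" .
  then have h1: "Im (cnj q) = Im q" by (rule arg_cong)
  have h2: "Im (cnj q) = - Im q" by simp
  have qreal: "Im q = 0" using h1 h2 by linarith
  have NRe: "N = complex_of_real (\<Sum>i<n. (cmod (v $ i))^2)"
  proof -
    have "cnj (v $ i) * v $ i = complex_of_real ((cmod (v $ i))^2)" for i
      using complex_norm_square[of "v $ i"] by (simp add: mult.commute)
    then show ?thesis unfolding N_def of_real_sum by simp
  qed
  have "\<exists>i<n. v $ i \<noteq> 0"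
  proof (rule ccontr)
    assume "\<not> (\<exists>i<n. v $ i \<noteq> 0)"
    then have "v = 0\<^sub>v n" using vc by (intro eq_vecI) auto
    then show False using v0 by simp
  qed
  then obtain i0 where i0: "i0 < n" "v $ i0 \<noteq> 0" by blast
  have "(\<Sum>i<n. (cmod (v $ i))^2) \<ge> (cmod (v $ i0))^2"
    by (rule member_le_sum) (use i0 in auto)
  moreover have "(cmod (v $ i0))^2 > 0" using i0 by simp
  ultimately have Npos: "(\<Sum>i<n. (cmod (v $ i))^2) > 0" by linarith
  have "Im q = Im a * (\<Sum>i<n. (cmod (v $ i))^2)" unfolding qN NRe by simp
  then show ?thesis using qreal Npos by simp
qed


lemma map_poly_of_real_inj:
  assumes "map_poly complex_of_real p = map_poly complex_of_real q" shows "p = q"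
proof (rule poly_eqI)
  fix i
  have "coeff (map_poly complex_of_real p) i = coeff (map_poly complex_of_real q) i" using assms by simp
  then show "coeff p i = coeff q i" by (simp add: coeff_map_poly)
qed

lemma map_poly_of_real_prod:
  "map_poly complex_of_real (\<Prod>e\<leftarrow>es. [:- e, 1:]) = (\<Prod>e\<leftarrow>es. [:- complex_of_real e, 1:])"
proof (induction es)
  case Nil then show ?case by simp
next
  case (Cons e es)
  interpret m: map_poly_comm_ring_hom "complex_of_real" ..
  have "map_poly complex_of_real (\<Prod>e\<leftarrow>e # es. [:- e, 1:])
      = map_poly complex_of_real [:- e, 1:] * map_poly complex_of_real (\<Prod>e\<leftarrow>es. [:- e, 1:])"
    by (simp only: list.map prod_list.Cons m.hom_mult)
  also have "map_poly complex_of_real [:- e, 1:] = [:- complex_of_real e, 1:]" by simp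
  finally show ?case unfolding Cons.IH by simp
qed

lemma real_split:
  fixes E :: "real mat"
  assumes E: "E \<in> carrier_mat n n" and sym: "transpose_mat E = E"
  shows "\<exists>es. char_poly E = (\<Prod>e\<leftarrow>es. [:- e, 1:])"
proof -
  let ?C = "map_mat complex_of_real E"
  have C: "?C \<in> carrier_mat n n" using E by simp
  obtain as where cp: "char_poly ?C = (\<Prod>a\<leftarrow>as. [:- a, 1:])"
    using char_poly_factorized[OF C] by blast
  have re: "Im a = 0" if a: "a \<in> set as" for a
  proof (rule sym_real_eigenvalue_real[OF E sym])
    have "poly (\<Prod>a\<leftarrow>as. [:- a, 1:]) a = 0" using a by (simp add: poly_prod_list prod_list_zero_iff)
    then show "eigenvalue ?C a" unfolding eigenvalue_root_char_poly[OF C] cp .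
  qed
  define es where "es = map Re as"
  have "as = map complex_of_real es" unfolding es_def using re
    by (induction as) (auto simp: complex_eq_iff)
  then have "char_poly ?C = map_poly complex_of_real (\<Prod>e\<leftarrow>es. [:- e, 1:])"
    using cp by (simp add: map_poly_of_real_prod comp_def)
  moreover have "char_poly ?C = map_poly complex_of_real (char_poly E)"
    using of_real_hom.char_poly_hom[OF E] by simp
  ultimately have "char_poly E = (\<Prod>e\<leftarrow>es. [:- e, 1:])" using map_poly_of_real_inj by metis
  then show ?thesis by blast
qed

definition hh :: "nat \<Rightarrow> real vec \<Rightarrow> real mat" where
  "hh n u = (if u $ 0 = 1 then 1\<^sub>m n else
     mat n n (\<lambda>(i,j). (if i = j then 1 else 0) -
        (u $ i - (if i = 0 then 1 else 0)) * (u $ j - (if j = 0 then 1 else 0)) / (1 - u $ 0)))"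

lemma delta_sum: fixes n :: nat assumes "i < n" shows "(\<Sum>l\<in>{0..<n}. (if i = l then 1 else 0) * f l) = (f i :: real)"
proof -
  have "(\<Sum>l\<in>{0..<n}. (if i = l then 1 else 0) * f l) = (\<Sum>l\<in>{0..<n}. if i = l then f l else 0)"
    by (rule sum.cong) auto
  also have "\<dots> = (if i \<in> {0..<n} then f i else 0)" by (rule sum.delta') simp
  finally show ?thesis using assms by simp
qed

lemma delta_sum': fixes n :: nat assumes "j < n" shows "(\<Sum>l\<in>{0..<n}. f l * (if l = j then 1 else 0)) = (f j :: real)"
proof -
  have "(\<Sum>l\<in>{0..<n}. f l * (if l = j then 1 else 0)) = (\<Sum>l\<in>{0..<n}. if l = j then f l else 0)"
    by (rule sum.cong) auto
  also have "\<dots> = (if j \<in> {0..<n} then f j else 0)" by (rule sum.delta) simp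
  finally show ?thesis using assms by simp
qed

lemma hh_props:
  assumes n: "n \<ge> 1" and u: "u \<in> carrier_vec n" and nu: "u \<bullet> u = 1"
  shows "hh n u \<in> carrier_mat n n" "transpose_mat (hh n u) = hh n u"
    "hh n u * hh n u = 1\<^sub>m n" "hh n u *\<^sub>v unit_vec n 0 = u"
proof -
  have dimu: "dim_vec u = n" using u by simp
  have nu': "(\<Sum>i<n. (u $ i)^2) = 1" using nu dimu unfolding scalar_prod_def
    by (simp add: power2_eq_square lessThan_atLeast0)
  show "hh n u \<in> carrier_mat n n" unfolding hh_def by auto
  show "transpose_mat (hh n u) = hh n u" unfolding hh_def by (auto intro!: eq_matI simp: mult.commute)
  have "hh n u * hh n u = 1\<^sub>m n \<and> hh n u *\<^sub>v unit_vec n 0 = u"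
  proof (cases "u $ 0 = 1")
    case True
    have s: "(\<Sum>i<n. (u $ i)^2) = (u $ 0)^2 + (\<Sum>i\<in>{1..<n}. (u $ i)^2)"
    proof -
      have "{..<n} = insert 0 {1..<n}" using n by auto
      then show ?thesis by simp
    qed
    then have "(\<Sum>i\<in>{1..<n}. (u $ i)^2) = 0" using nu' True by simp
    then have z: "u $ i = 0" if "i \<in> {1..<n}" for i
      using sum_nonneg_eq_0_iff[of "{1..<n}" "\<lambda>i. (u $ i)^2"] that by auto
    have "u = unit_vec n 0"
      by (rule eq_vecI) (use z True dimu in \<open>auto simp: unit_vec_def\<close>)
    then show ?thesis unfolding hh_def using True by simp
  next
    case False
    define d where "d = 1 - u $ 0"
    define w where "w i = u $ i - (if i = (0::nat) then 1 else 0)" for i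
    have u0: "(u $ 0)^2 \<le> 1"
    proof -
      have "(u $ 0)^2 \<le> (\<Sum>i<n. (u $ i)^2)" by (rule member_le_sum) (use n in auto)
      then show ?thesis using nu' by simp
    qed
    then have "\<bar>u $ 0\<bar> \<le> 1" by (simp add: abs_square_le_1)
    then have "u $ 0 \<le> 1" by (rule abs_le_D1)
    then have d: "d > 0" using False unfolding d_def by simp
    have sw: "(\<Sum>l\<in>{0..<n}. w l * w l) = 2 * d"
    proof -
      have "(\<Sum>l\<in>{0..<n}. w l * w l) = (\<Sum>l\<in>{0..<n}. (u $ l)^2 - 2 * (if l = 0 then u $ l else 0) + (if l = 0 then 1 else 0))"
        unfolding w_def by (intro sum.cong refl) (auto simp: power2_eq_square algebra_simps)
      also have "\<dots> = (\<Sum>l\<in>{0..<n}. (u $ l)^2) - 2 * u $ 0 + 1"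
        using n by (simp add: sum.distrib sum_subtractf sum_distrib_left[symmetric] sum.delta')
      also have "\<dots> = 2 * d" using nu' unfolding d_def by (simp add: lessThan_atLeast0)
      finally show ?thesis .
    qed
    have H: "hh n u = mat n n (\<lambda>(i,j). (if i = j then 1 else 0) - w i * w j / d)"
      unfolding hh_def w_def d_def using False by simp
    have "hh n u * hh n u = 1\<^sub>m n"
    proof (rule eq_matI)
      fix i j assume ij: "i < dim_row (1\<^sub>m n :: real mat)" "j < dim_col (1\<^sub>m n :: real mat)"
      then have i: "i < n" and j: "j < n" by auto
      have "(hh n u * hh n u) $$ (i, j) = (\<Sum>l\<in>{0..<n}. ((if i = l then 1 else 0) - w i * w l / d) * ((if l = j then 1 else 0) - w l * w j / d))"
        unfolding H using i j by (simp add: scalar_prod_def row_def col_def)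
      also have "\<dots> = (\<Sum>l\<in>{0..<n}. (if i = l then 1 else 0) * (if l = j then 1 else 0))
          - (\<Sum>l\<in>{0..<n}. (if i = l then 1 else 0) * (w l * w j / d))
          - (\<Sum>l\<in>{0..<n}. (w i * w l / d) * (if l = j then 1 else 0))
          + (w i * w j / d^2) * (\<Sum>l\<in>{0..<n}. w l * w l)"
        by (simp add: sum.distrib sum_subtractf sum_distrib_left power2_eq_square algebra_simps)
      also have "\<dots> = (if i = j then 1 else 0) - w i * w j / d - w i * w j / d + (w i * w j / d^2) * (2 * d)"
        unfolding sw delta_sum[OF i] delta_sum'[OF j] by simp
      also have "\<dots> = (if i = j then 1 else 0)" using d by (simp add: power2_eq_square field_simps)
      finally show "(hh n u * hh n u) $$ (i, j) = 1\<^sub>m n $$ (i, j)" using i j by simp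
    qed (auto simp: H)
    moreover have "hh n u *\<^sub>v unit_vec n 0 = u"
    proof (rule eq_vecI)
      fix i assume "i < dim_vec u" then have i: "i < n" using dimu by simp
      have "(hh n u *\<^sub>v unit_vec n 0) $ i = (\<Sum>l\<in>{0..<n}. ((if i = l then 1 else 0) - w i * w l / d) * (if l = 0 then 1 else 0))"
        unfolding H using i by (simp add: scalar_prod_def row_def unit_vec_def)
      also have "\<dots> = (if i = 0 then 1 else 0) - w i * w 0 / d" using delta_sum'[of 0 n] n i
        by (subst delta_sum') auto
      also have "w 0 = - d" unfolding w_def d_def by simp
      also have "(if i = 0 then 1 else 0) - w i * (- d) / d = u $ i" using d unfolding w_def by simp
      finally show "(hh n u *\<^sub>v unit_vec n 0) $ i = u $ i" .
    qed (auto simp: H dimu)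
    ultimately show ?thesis by simp
  qed
  then show "hh n u * hh n u = 1\<^sub>m n" "hh n u *\<^sub>v unit_vec n 0 = u" by auto
qed


definition diagm :: "real list \<Rightarrow> real mat" where
  "diagm es = mat (length es) (length es) (\<lambda>(i,j). if i = j then es ! i else 0)"

lemma diagm_carrier[simp]: "diagm es \<in> carrier_mat (length es) (length es)"
  unfolding diagm_def by simp

lemma vec_pos: assumes v: "v \<in> carrier_vec n" and v0: "v \<noteq> 0\<^sub>v n" shows "v \<bullet> v > (0::real)"
proof -
  have "\<exists>i<n. v $ i \<noteq> 0"
  proof (rule ccontr)
    assume "\<not> (\<exists>i<n. v $ i \<noteq> 0)"
    then have "v = 0\<^sub>v n" using v by (intro eq_vecI) auto
    then show False using v0 by simp
  qed
  then obtain i0 where i0: "i0 < n" "v $ i0 \<noteq> 0" by blast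
  have "v \<bullet> v = (\<Sum>i\<in>{0..<n}. (v $ i)^2)" using v unfolding scalar_prod_def by (simp add: power2_eq_square)
  also have "\<dots> \<ge> (v $ i0)^2" by (rule member_le_sum) (use i0 in auto)
  finally show ?thesis using i0 by (smt (verit) zero_less_power2)
qed

lemma bd_mult:
  assumes A: "A \<in> carrier_mat 1 1" and B: "B \<in> carrier_mat 1 1" and C: "C \<in> carrier_mat m m" and D: "D \<in> carrier_mat m m"
  shows "four_block_mat A (0\<^sub>m 1 m) (0\<^sub>m m 1) C * four_block_mat B (0\<^sub>m 1 m) (0\<^sub>m m 1) (D :: real mat)
    = four_block_mat (A * B) (0\<^sub>m 1 m) (0\<^sub>m m 1) (C * D)"
  by (subst mult_four_block_mat[OF A zero_carrier_mat zero_carrier_mat C B zero_carrier_mat zero_carrier_mat D])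
    (use A B C D in simp)

lemma spectral:
  "A \<in> carrier_mat n n \<Longrightarrow> transpose_mat A = A \<Longrightarrow> char_poly A = (\<Prod>e\<leftarrow>es. [:- e, 1:]) \<Longrightarrow>
   \<exists>U. U \<in> carrier_mat n n \<and> transpose_mat U * U = 1\<^sub>m n \<and> U * transpose_mat U = 1\<^sub>m n \<and>
       A = U * diagm es * transpose_mat U"
proof (induction es arbitrary: A n)
  case Nil
  have "degree (char_poly A) = n" using degree_monic_char_poly[OF Nil(1)] by simp
  then have n0: "n = 0" using Nil(3) by simp
  show ?case
  proof (intro exI[of _ "1\<^sub>m 0"] conjI)
    show "A = 1\<^sub>m 0 * diagm [] * transpose_mat (1\<^sub>m 0)"
      using Nil(1) n0 by (intro eq_matI) (auto simp: diagm_def)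
  qed (auto simp: n0)
next
  case (Cons e es A n)
  note A = Cons.prems(1) and symA = Cons.prems(2) and cpA = Cons.prems(3)
  have "degree (char_poly A) = n" using degree_monic_char_poly[OF A] by simp
  then have nlen: "n = Suc (length es)" using cpA degree_linear_factors[of uminus "e # es"] by simp
  define m where "m = length es"
  have n: "n = Suc m" using nlen m_def by simp
  have ev: "eigenvalue A e" unfolding eigenvalue_root_char_poly[OF A] cpA by simp
  define v where "v = find_eigenvector A e"
  have evv: "eigenvector A v e" unfolding v_def by (rule find_eigenvector[OF A ev])
  have vc: "v \<in> carrier_vec n" and v0: "v \<noteq> 0\<^sub>v n" and Av: "A *\<^sub>v v = e \<cdot>\<^sub>v v"
    using evv A unfolding eigenvector_def by auto
  have vv: "v \<bullet> v > 0" by (rule vec_pos[OF vc v0])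
  define u where "u = (1 / sqrt (v \<bullet> v)) \<cdot>\<^sub>v v"
  have uc: "u \<in> carrier_vec n" unfolding u_def using vc by simp
  have uu: "u \<bullet> u = 1" unfolding u_def using vc vv
    by (simp add: smult_scalar_prod_distrib scalar_prod_smult_distrib real_sqrt_mult[symmetric])
  have Au: "A *\<^sub>v u = e \<cdot>\<^sub>v u" unfolding u_def using A vc Av
    by (simp add: mult_mat_vec smult_smult_assoc mult.commute)
  define H where "H = hh n u"
  have n1: "n \<ge> 1" using n by simp
  note hp = hh_props[OF n1 uc uu, folded H_def]
  have H: "H \<in> carrier_mat n n" and HT: "transpose_mat H = H" and HH: "H * H = 1\<^sub>m n"
    and He: "H *\<^sub>v unit_vec n 0 = u" using hp by auto
  have Hu: "H *\<^sub>v u = unit_vec n 0"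
  proof -
    have "H *\<^sub>v u = H *\<^sub>v (H *\<^sub>v unit_vec n 0)" unfolding He ..
    also have "\<dots> = (H * H) *\<^sub>v unit_vec n 0" using H by (simp add: assoc_mult_mat_vec)
    finally show ?thesis unfolding HH by simp
  qed
  define A' where "A' = H * A * H"
  have A': "A' \<in> carrier_mat n n" unfolding A'_def using H A by simp
  have symA': "transpose_mat A' = A'"
  proof -
    have HA: "H * A \<in> carrier_mat n n" using H A by simp
    have "transpose_mat (H * A * H) = transpose_mat H * transpose_mat (H * A)"
      by (rule transpose_mult[OF HA H])
    also have "transpose_mat (H * A) = transpose_mat A * transpose_mat H" by (rule transpose_mult[OF H A])
    finally have "transpose_mat (H * A * H) = H * (A * H)" unfolding HT symA .
    then show ?thesis unfolding A'_def using H A by (simp add: assoc_mult_mat[of _ n n _ n _ n])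
  qed
  have A'e: "A' *\<^sub>v unit_vec n 0 = e \<cdot>\<^sub>v unit_vec n 0"
  proof -
    have HA: "H * A \<in> carrier_mat n n" using H A by simp
    have "A' *\<^sub>v unit_vec n 0 = (H * A) *\<^sub>v (H *\<^sub>v unit_vec n 0)"
      unfolding A'_def by (rule assoc_mult_mat_vec[OF HA H]) simp
    also have "\<dots> = H *\<^sub>v (A *\<^sub>v (H *\<^sub>v unit_vec n 0))"
      by (rule assoc_mult_mat_vec[OF H A]) (use H in simp)
    finally have "A' *\<^sub>v unit_vec n 0 = H *\<^sub>v (A *\<^sub>v (H *\<^sub>v unit_vec n 0))" .
    also have "\<dots> = H *\<^sub>v (e \<cdot>\<^sub>v u)" unfolding He Au ..
    also have "\<dots> = e \<cdot>\<^sub>v (H *\<^sub>v u)" using H uc by (simp add: mult_mat_vec)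
    finally show ?thesis unfolding Hu .
  qed
  have col0: "A' $$ (i, 0) = (if i = 0 then e else 0)" if i: "i < n" for i
  proof -
    have "(A' *\<^sub>v unit_vec n 0) $ i = A' $$ (i, 0)"
      using A' i n by (simp add: row_def scalar_prod_right_unit)
    moreover have "(A' *\<^sub>v unit_vec n 0) $ i = e * (if i = 0 then 1 else 0)"
      unfolding A'e using i by simp
    ultimately show ?thesis by (cases "i = 0") auto
  qed
  have A'sym: "A' $$ (i, j) = A' $$ (j, i)" if "i < n" "j < n" for i j
    using symA' that A' by (metis carrier_matD index_transpose_mat(1))
  define A1 where "A1 = mat 1 1 (\<lambda>_. e)"
  define A3 where "A3 = mat m m (\<lambda>(i,j). A' $$ (Suc i, Suc j))"
  have A1: "A1 \<in> carrier_mat 1 1" unfolding A1_def by simp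
  have A3: "A3 \<in> carrier_mat m m" unfolding A3_def by simp
  have blk: "A' = four_block_mat A1 (0\<^sub>m 1 m) (0\<^sub>m m 1) A3"
  proof (rule eq_matI)
    fix i j assume ij: "i < dim_row (four_block_mat A1 (0\<^sub>m 1 m) (0\<^sub>m m 1) A3)"
      "j < dim_col (four_block_mat A1 (0\<^sub>m 1 m) (0\<^sub>m m 1) A3)"
    then have i: "i < n" and j: "j < n" using A1 A3 n by auto
    show "A' $$ (i, j) = four_block_mat A1 (0\<^sub>m 1 m) (0\<^sub>m m 1) A3 $$ (i, j)"
    proof (cases "i = 0")
      case True
      then show ?thesis using col0[OF j] A'sym[OF i j] i j A1 A3 n by (simp add: A1_def)
    next
      case False
      then show ?thesis using col0[OF i] i j A1 A3 n
        by (cases j) (auto simp: A3_def A1_def)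
    qed
  qed (use A' A1 A3 n in auto)
  have simAA': "similar_mat A' A"
    unfolding similar_mat_def similar_mat_wit_def Let_def using A A' H HH A'_def
    by (intro exI[of _ H]) auto
  have "char_poly A' = char_poly A1 * char_poly A3"
    unfolding blk by (rule char_poly_four_block_zeros_col[OF A1 _ A3]) simp
  also have "char_poly A1 = [:- e, 1:]" unfolding A1_def by (simp add: char_poly_defs det_def sign_def)
  finally have "[:- e, 1:] * char_poly A3 = [:- e, 1:] * (\<Prod>e\<leftarrow>es. [:- e, 1:])"
    using char_poly_similar[OF simAA'] cpA by simp
  then have cp3: "char_poly A3 = (\<Prod>e\<leftarrow>es. [:- e, 1:])" by (rule mult_left_cancel[THEN iffD1, rotated]) simp
  have sym3: "transpose_mat A3 = A3"
    unfolding A3_def by (rule eq_matI) (use A'sym n in auto)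
  obtain U3 where U3: "U3 \<in> carrier_mat m m" and U3a: "transpose_mat U3 * U3 = 1\<^sub>m m"
    and U3b: "U3 * transpose_mat U3 = 1\<^sub>m m" and A3U: "A3 = U3 * diagm es * transpose_mat U3"
    using Cons.IH[OF A3 sym3 cp3] by blast
  define V where "V = four_block_mat (1\<^sub>m 1) (0\<^sub>m 1 m) (0\<^sub>m m 1) U3"
  have V: "V \<in> carrier_mat n n" unfolding V_def
    using four_block_carrier_mat[OF one_carrier_mat U3, of 1 "0\<^sub>m 1 m" "0\<^sub>m m 1"] n by simp
  have VT: "transpose_mat V = four_block_mat (1\<^sub>m 1) (0\<^sub>m 1 m) (0\<^sub>m m 1) (transpose_mat U3)"
    unfolding V_def
    by (subst transpose_four_block_mat[OF one_carrier_mat zero_carrier_mat zero_carrier_mat U3]) simp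
  have VTV: "transpose_mat V * V = 1\<^sub>m n"
    unfolding VT unfolding V_def n using U3 U3a
    by (subst bd_mult) auto
  have VVT: "V * transpose_mat V = 1\<^sub>m n"
    unfolding VT unfolding V_def n using U3 U3b
    by (subst bd_mult) auto
  have D: "diagm (e # es) = four_block_mat A1 (0\<^sub>m 1 m) (0\<^sub>m m 1) (diagm es)"
    by (rule eq_matI) (auto simp: diagm_def A1_def m_def nth_Cons')
  have VDV: "V * diagm (e # es) * transpose_mat V = A'"
  proof -
    have "V * diagm (e # es) = four_block_mat A1 (0\<^sub>m 1 m) (0\<^sub>m m 1) (U3 * diagm es)"
      unfolding V_def D using U3 A1 m_def
      by (subst bd_mult) auto
    also have "\<dots> * transpose_mat V = four_block_mat A1 (0\<^sub>m 1 m) (0\<^sub>m m 1) (U3 * diagm es * transpose_mat U3)"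
      unfolding VT using U3 A1 m_def
      by (subst bd_mult) auto
    finally show ?thesis unfolding A3U[symmetric] blk .
  qed
  define U where "U = H * V"
  have Uc: "U \<in> carrier_mat n n" unfolding U_def using H V by simp
  have UT: "transpose_mat U = transpose_mat V * H" unfolding U_def using H V HT by (simp add: transpose_mult)
  have VTc: "transpose_mat V \<in> carrier_mat n n" using V by simp
  have "transpose_mat U * U = transpose_mat V * (H * H) * V"
    unfolding UT unfolding U_def using H V VTc by (simp add: assoc_mult_mat[of _ n n _ n _ n])
  also have "\<dots> = 1\<^sub>m n" unfolding HH using V VTc VTV by simp
  finally have U1: "transpose_mat U * U = 1\<^sub>m n" .
  have "U * transpose_mat U = H * (V * transpose_mat V) * H"
    unfolding UT unfolding U_def using H V VTc by (simp add: assoc_mult_mat[of _ n n _ n _ n])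
  also have "\<dots> = 1\<^sub>m n" unfolding VVT using H HH by simp
  finally have U2: "U * transpose_mat U = 1\<^sub>m n" .
  have Dc: "diagm (e # es) \<in> carrier_mat n n" using diagm_carrier[of "e # es"] nlen by simp
  have "U * diagm (e # es) * transpose_mat U = H * (V * diagm (e # es) * transpose_mat V) * H"
    unfolding UT unfolding U_def using H V VTc Dc by (simp add: assoc_mult_mat[of _ n n _ n _ n])
  also have "\<dots> = H * A' * H" unfolding VDV ..
  also have "\<dots> = (H * H) * A * (H * H)" unfolding A'_def using H A by (simp add: assoc_mult_mat[of _ n n _ n _ n])
  also have "\<dots> = A" unfolding HH using A by simp
  finally show ?case using Uc U1 U2 by metis
qed

lemma mult_entry:
  assumes A: "A \<in> carrier_mat n m" and B: "B \<in> carrier_mat m p" and i: "i < n" and j: "j < p"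
  shows "(A * B) $$ (i, j) = (\<Sum>l\<in>{0..<m}. A $$ (i, l) * B $$ (l, j))"
proof -
  have d: "dim_row A = n" "dim_col A = m" "dim_row B = m" "dim_col B = p" using A B by auto
  show ?thesis using i j by (simp add: d index_mult_mat scalar_prod_def row_def col_def)
qed

lemma inner_expand:
  fixes T :: "real mat"
  assumes T: "T \<in> carrier_mat n n" and v: "v \<in> carrier_vec n"
  shows "mat_inner T ((c \<cdot>\<^sub>m 1\<^sub>m n) - vtensor v v)
    = c * (\<Sum>a\<in>{0..<n}. T $$ (a, a)) - (\<Sum>a\<in>{0..<n}. \<Sum>b\<in>{0..<n}. T $$ (a, b) * (v $ a * v $ b))"
proof -
  let ?M = "(c \<cdot>\<^sub>m 1\<^sub>m n) - vtensor v v"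
  have dv: "dim_vec v = n" using v by simp
  have M: "?M \<in> carrier_mat n n" unfolding vtensor_def using dv by auto
  have Mab: "?M $$ (b, a) = c * (if b = a then 1 else 0) - v $ b * v $ a" if "a < n" "b < n" for a b
    unfolding vtensor_def using that dv by simp
  have "mat_inner T ?M = (\<Sum>a\<in>{0..<n}. \<Sum>b\<in>{0..<n}. T $$ (a, b) * ?M $$ (b, a))"
    unfolding mat_inner_def mat_trace_def using T M
    by (auto simp: mult_entry[OF T M] lessThan_atLeast0 intro!: sum.cong)
  also have "\<dots> = (\<Sum>a\<in>{0..<n}. c * T $$ (a, a) - (\<Sum>b\<in>{0..<n}. T $$ (a, b) * (v $ a * v $ b)))"
  proof (rule sum.cong[OF refl])
    fix a assume a: "a \<in> {0..<n}"
    have "(\<Sum>b\<in>{0..<n}. T $$ (a, b) * ?M $$ (b, a))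
        = (\<Sum>b\<in>{0..<n}. c * (T $$ (a, b) * (if b = a then 1 else 0)) - T $$ (a, b) * (v $ a * v $ b))"
      by (rule sum.cong[OF refl]) (use a in \<open>simp add: Mab algebra_simps\<close>)
    also have "\<dots> = c * (\<Sum>b\<in>{0..<n}. T $$ (a, b) * (if b = a then 1 else 0)) - (\<Sum>b\<in>{0..<n}. T $$ (a, b) * (v $ a * v $ b))"
      by (simp add: sum_subtractf sum_distrib_left)
    also have "(\<Sum>b\<in>{0..<n}. T $$ (a, b) * (if b = a then 1 else 0)) = T $$ (a, a)"
      using delta_sum'[of a n "\<lambda>b. T $$ (a, b)"] a by simp
    finally show "(\<Sum>b\<in>{0..<n}. T $$ (a, b) * ?M $$ (b, a)) = c * T $$ (a, a) - (\<Sum>b\<in>{0..<n}. T $$ (a, b) * (v $ a * v $ b))" .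
  qed
  also have "\<dots> = c * (\<Sum>a\<in>{0..<n}. T $$ (a, a)) - (\<Sum>a\<in>{0..<n}. \<Sum>b\<in>{0..<n}. T $$ (a, b) * (v $ a * v $ b))"
    by (simp add: sum_subtractf sum_distrib_left)
  finally show ?thesis .
qed

lemma udu_entry:
  assumes U: "U \<in> carrier_mat n n" and l: "length mu = n" and a: "a < n" and b: "b < n"
  shows "(U * diagm mu * transpose_mat U) $$ (a, b) = (\<Sum>j\<in>{0..<n}. U $$ (a, j) * mu ! j * U $$ (b, j))"
proof -
  have D: "diagm mu \<in> carrier_mat n n" using diagm_carrier[of mu] l by simp
  have UD: "U * diagm mu \<in> carrier_mat n n" using U D by simp
  have UT: "transpose_mat U \<in> carrier_mat n n" using U by simp
  have "(U * diagm mu * transpose_mat U) $$ (a, b) = (\<Sum>l\<in>{0..<n}. (U * diagm mu) $$ (a, l) * U $$ (b, l))"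
    using U a b by (simp add: mult_entry[OF UD UT a b])
  also have "\<dots> = (\<Sum>l\<in>{0..<n}. U $$ (a, l) * mu ! l * U $$ (b, l))"
  proof (rule sum.cong[OF refl])
    fix l assume l': "l \<in> {0..<n}"
    have "(U * diagm mu) $$ (a, l) = (\<Sum>j\<in>{0..<n}. U $$ (a, j) * (if j = l then mu ! l else 0))"
      using l' l by (subst mult_entry[OF U D a]) (auto simp: diagm_def intro!: sum.cong)
    also have "\<dots> = (\<Sum>j\<in>{0..<n}. (mu ! l * U $$ (a, j)) * (if j = l then 1 else 0))"
      by (rule sum.cong) auto
    also have "\<dots> = U $$ (a, l) * mu ! l" using delta_sum'[of l n "\<lambda>j. mu ! l * U $$ (a, j)"] l' by simp
    finally show "(U * diagm mu) $$ (a, l) * U $$ (b, l) = U $$ (a, l) * mu ! l * U $$ (b, l)" by simp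
  qed
  finally show ?thesis .
qed


lemma diagm_pow_mult:
  "diagm (map (\<lambda>x. x ^ i) mu) * diagm mu = diagm (map (\<lambda>x. x ^ Suc i) mu)"
proof -
  let ?n = "length mu"
  have D1: "diagm (map (\<lambda>x. x ^ i) mu) \<in> carrier_mat ?n ?n" using diagm_carrier[of "map (\<lambda>x. x ^ i) mu"] by simp
  have D2: "diagm mu \<in> carrier_mat ?n ?n" by simp
  show ?thesis
  proof (rule eq_matI)
    fix a b assume ab: "a < dim_row (diagm (map (\<lambda>x. x ^ Suc i) mu))" "b < dim_col (diagm (map (\<lambda>x. x ^ Suc i) mu))"
    then have a: "a < ?n" and b: "b < ?n" by (auto simp: diagm_def)
    have "(diagm (map (\<lambda>x. x ^ i) mu) * diagm mu) $$ (a, b)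
      = (\<Sum>l\<in>{0..<?n}. (if a = l then 1 else 0) * ((mu ! a)^i * (if l = b then mu ! l else 0)))"
      using a b by (subst mult_entry[OF D1 D2 a b]) (auto simp: diagm_def intro!: sum.cong)
    also have "\<dots> = (mu ! a)^i * (if a = b then mu ! a else 0)"
      by (rule delta_sum[OF a])
    finally show "(diagm (map (\<lambda>x. x ^ i) mu) * diagm mu) $$ (a, b) = diagm (map (\<lambda>x. x ^ Suc i) mu) $$ (a, b)"
      using a b by (simp add: diagm_def)
  qed (auto simp: diagm_def)
qed

lemma pow_spec:
  assumes U: "U \<in> carrier_mat n n" and U1: "transpose_mat U * U = 1\<^sub>m n" and U2: "U * transpose_mat U = 1\<^sub>m n"
    and l: "length mu = n" and E: "E = U * diagm mu * transpose_mat U"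
  shows "E ^\<^sub>m i = U * diagm (map (\<lambda>x. x ^ i) mu) * transpose_mat U"
proof (induction i)
  case 0
  have Ec: "E \<in> carrier_mat n n" unfolding E using U l diagm_carrier[of mu] by simp
  have "diagm (map (\<lambda>x. x ^ 0) mu) = 1\<^sub>m n" using l by (intro eq_matI) (auto simp: diagm_def)
  then show ?case using Ec U U2 by simp
next
  case (Suc i)
  define Di where "Di = diagm (map (\<lambda>x. x ^ i) mu)"
  define D where "D = diagm mu"
  define UT where "UT = transpose_mat U"
  have Di: "Di \<in> carrier_mat n n" unfolding Di_def using diagm_carrier[of "map (\<lambda>x. x ^ i) mu"] l by simp
  have D: "D \<in> carrier_mat n n" unfolding D_def using diagm_carrier[of mu] l by simp
  have UTc: "UT \<in> carrier_mat n n" unfolding UT_def using U by simp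
  have "E ^\<^sub>m Suc i = (U * Di * UT) * (U * D * UT)"
    using Suc unfolding E Di_def D_def UT_def by simp
  also have "\<dots> = U * (Di * ((UT * U) * (D * UT)))"
    using U Di D UTc by (simp add: assoc_mult_mat[of _ n n _ n _ n])
  also have "\<dots> = U * (Di * D) * UT"
    unfolding UT_def U1 using U Di D UTc by (simp add: assoc_mult_mat[of _ n n _ n _ n] UT_def)
  finally show ?case unfolding Di_def D_def UT_def diagm_pow_mult .
qed

lemma sum_swap3:
  fixes g :: "nat \<Rightarrow> nat \<Rightarrow> nat \<Rightarrow> real"
  shows "(\<Sum>a\<in>I. \<Sum>b\<in>I. \<Sum>j\<in>J. g a b j) = (\<Sum>j\<in>J. \<Sum>a\<in>I. \<Sum>b\<in>I. g a b j)"
proof -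
  have "(\<Sum>a\<in>I. \<Sum>b\<in>I. \<Sum>j\<in>J. g a b j) = (\<Sum>a\<in>I. \<Sum>j\<in>J. \<Sum>b\<in>I. g a b j)"
    by (rule sum.cong[OF refl]) (rule sum.swap)
  also have "\<dots> = (\<Sum>j\<in>J. \<Sum>a\<in>I. \<Sum>b\<in>I. g a b j)" by (rule sum.swap)
  finally show ?thesis .
qed

lemma sq_sum: "(\<Sum>a\<in>I. \<Sum>b\<in>I. c * (X a * X b)) = c * (sum X I)^2" for c :: real
proof -
  have "(sum X I)^2 = (\<Sum>i\<in>I. \<Sum>j\<in>I. X i * X j)" by (simp only: power2_eq_square sum_product)
  then show ?thesis by (simp only: sum_distrib_left)
qed

lemma sum_quad:
  fixes g :: "nat \<Rightarrow> nat \<Rightarrow> real"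
  shows "(\<Sum>a\<in>I. \<Sum>b\<in>I. (\<Sum>j\<in>J. g a j * t j * g b j) * (v a * v b))
    = (\<Sum>j\<in>J. t j * (\<Sum>a\<in>I. g a j * v a)^2)"
proof -
  have "(\<Sum>a\<in>I. \<Sum>b\<in>I. (\<Sum>j\<in>J. g a j * t j * g b j) * (v a * v b))
     = (\<Sum>a\<in>I. \<Sum>b\<in>I. \<Sum>j\<in>J. t j * ((g a j * v a) * (g b j * v b)))"
    by (intro sum.cong refl) (simp add: sum_distrib_left sum_distrib_right mult_ac)
  also have "\<dots> = (\<Sum>j\<in>J. \<Sum>a\<in>I. \<Sum>b\<in>I. t j * ((g a j * v a) * (g b j * v b)))" by (rule sum_swap3)
  also have "\<dots> = (\<Sum>j\<in>J. t j * (\<Sum>a\<in>I. g a j * v a)^2)"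
    by (rule sum.cong[OF refl]) (rule sq_sum)
  finally show ?thesis .
qed

lemma sum_diag:
  fixes g :: "nat \<Rightarrow> nat \<Rightarrow> real"
  assumes "\<And>j. j \<in> J \<Longrightarrow> (\<Sum>a\<in>I. g a j * g a j) = 1"
  shows "(\<Sum>a\<in>I. \<Sum>j\<in>J. g a j * t j * g a j) = (\<Sum>j\<in>J. t j)"
proof -
  have "(\<Sum>a\<in>I. \<Sum>j\<in>J. g a j * t j * g a j) = (\<Sum>j\<in>J. \<Sum>a\<in>I. t j * (g a j * g a j))"
    by (subst sum.swap) (simp add: algebra_simps)
  also have "\<dots> = (\<Sum>j\<in>J. t j * (\<Sum>a\<in>I. g a j * g a j))" by (simp add: sum_distrib_left)
  also have "\<dots> = (\<Sum>j\<in>J. t j)" using assms by simp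
  finally show ?thesis .
qed

lemma sum_norm:
  fixes g :: "nat \<Rightarrow> nat \<Rightarrow> real" and n :: nat
  assumes "\<And>a b. a < n \<Longrightarrow> b < n \<Longrightarrow> (\<Sum>j\<in>{0..<n}. g a j * g b j) = (if a = b then 1 else 0)"
  shows "(\<Sum>j\<in>{0..<n}. (\<Sum>a\<in>{0..<n}. g a j * v a)^2) = (\<Sum>a\<in>{0..<n}. v a * v a)"
proof -
  have "(\<Sum>j\<in>{0..<n}. (\<Sum>a\<in>{0..<n}. g a j * v a)^2)
      = (\<Sum>j\<in>{0..<n}. \<Sum>a\<in>{0..<n}. \<Sum>b\<in>{0..<n}. (v a * v b) * (g a j * g b j))"
    unfolding power2_eq_square sum_product by (intro sum.cong refl) (simp add: mult_ac)
  also have "\<dots> = (\<Sum>a\<in>{0..<n}. \<Sum>b\<in>{0..<n}. \<Sum>j\<in>{0..<n}. (v a * v b) * (g a j * g b j))"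
    by (rule sum_swap3[symmetric])
  also have "\<dots> = (\<Sum>a\<in>{0..<n}. \<Sum>b\<in>{0..<n}. (if a = b then 1 else 0) * (v a * v b))"
    by (intro sum.cong refl) (simp add: sum_distrib_left[symmetric] assms mult.commute)
  also have "\<dots> = (\<Sum>a\<in>{0..<n}. v a * v a)"
    by (intro sum.cong refl) (simp add: delta_sum)
  finally show ?thesis .
qed

theorem mainTheorem14:
  fixes n k :: nat and E :: "real mat" and v :: "real vec"
  assumes "1 \<le> k" and "2 * k \<le> n"
    and "E \<in> carrier_mat n n" and "sym_mat E"
    and "E \<in> Gamma_plus k"
    and "v \<in> carrier_vec n"
  shows "mat_inner (newton_T k E)
           ((1/2 * (v \<bullet> v)) \<cdot>\<^sub>m 1\<^sub>m n - vtensor v v)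
         \<ge> (real n - 2 * real k) * (real n - real k + 1) / (2 * real n)
             * sigma (k - 1) E * (v \<bullet> v)"
proof -
  note k1 = assms(1) and kn = assms(2) and Ec = assms(3) and vc = assms(6)
  have symE: "transpose_mat E = E" using assms(4) unfolding sym_mat_def by simp
  define lam where "lam = eigvals E"
  have cpl: "char_poly E = (\<Prod>e\<leftarrow>lam. [:- e, 1:])"
    unfolding lam_def eigvals_def using real_split[OF Ec symE] by (rule someI_ex)
  have len: "length lam = n"
    using degree_monic_char_poly[OF Ec] cpl degree_linear_factors[of uminus lam] by simp
  obtain U where U: "U \<in> carrier_mat n n" and U1: "transpose_mat U * U = 1\<^sub>m n"
    and U2: "U * transpose_mat U = 1\<^sub>m n" and EU: "E = U * diagm lam * transpose_mat U"
    using spectral[OF Ec symE cpl] by blast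
  define I where "I = {0..<n}"
  define f where "f i = lam ! i" for i
  have fI: "finite I" and cI: "card I = n" unfolding I_def by auto
  have sig: "sigma j E = ES I f j" for j
    unfolding sigma_def esym_ES lam_def[symmetric] I_def f_def len ..
  define t where "t j = ES (I - {j}) f (k - 1)" for j
  define T where "T = newton_T k E"
  have Tc: "T \<in> carrier_mat n n" unfolding T_def newton_T_def using Ec by auto
  have Tent: "T $$ (a, b) = (\<Sum>j\<in>I. U $$ (a, j) * t j * U $$ (b, j))" if a: "a < n" and b: "b < n" for a b
  proof -
    have pw: "(E ^\<^sub>m i) $$ (a, b) = (\<Sum>j\<in>I. U $$ (a, j) * f j ^ i * U $$ (b, j))" for i
    proof -
      have "E ^\<^sub>m i = U * diagm (map (\<lambda>x. x ^ i) lam) * transpose_mat U"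
        by (rule pow_spec[OF U U1 U2 len EU])
      then have "(E ^\<^sub>m i) $$ (a, b) = (\<Sum>j\<in>{0..<n}. U $$ (a, j) * (map (\<lambda>x. x ^ i) lam) ! j * U $$ (b, j))"
        using udu_entry[OF U _ a b, of "map (\<lambda>x. x ^ i) lam"] len by simp
      also have "\<dots> = (\<Sum>j\<in>I. U $$ (a, j) * f j ^ i * U $$ (b, j))"
        unfolding I_def f_def using len by (intro sum.cong refl) simp
      finally show ?thesis .
    qed
    have "T $$ (a, b) = (\<Sum>i<k. (-1) ^ i * sigma (k - 1 - i) E * (E ^\<^sub>m i) $$ (a, b))"
      unfolding T_def newton_T_def using Ec a b by simp
    also have "\<dots> = (\<Sum>i<k. \<Sum>j\<in>I. U $$ (a, j) * ((-1) ^ i * ES I f (k - 1 - i) * f j ^ i) * U $$ (b, j))"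
      unfolding pw sig by (intro sum.cong refl) (simp add: sum_distrib_left mult_ac)
    also have "\<dots> = (\<Sum>j\<in>I. \<Sum>i<k. U $$ (a, j) * ((-1) ^ i * ES I f (k - 1 - i) * f j ^ i) * U $$ (b, j))"
      by (rule sum.swap)
    also have "\<dots> = (\<Sum>j\<in>I. U $$ (a, j) * (\<Sum>i<k. (-1) ^ i * ES I f (k - 1 - i) * f j ^ i) * U $$ (b, j))"
      by (simp add: sum_distrib_left sum_distrib_right)
    also have "\<dots> = (\<Sum>j\<in>I. U $$ (a, j) * t j * U $$ (b, j))"
    proof (rule sum.cong[OF refl])
      fix j assume j: "j \<in> I"
      have "(\<Sum>i<Suc (k - 1). (-1) ^ i * ES I f (k - 1 - i) * f j ^ i) = ES (I - {j}) f (k - 1)"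
        by (rule newton_coeff_identity[OF fI j])
      then show "U $$ (a, j) * (\<Sum>i<k. (-1) ^ i * ES I f (k - 1 - i) * f j ^ i) * U $$ (b, j) = U $$ (a, j) * t j * U $$ (b, j)"
        using k1 unfolding t_def by simp
    qed
    finally show ?thesis .
  qed
  define w where "w j = (\<Sum>a\<in>I. U $$ (a, j) * v $ a)" for j
  define c where "c = 1/2 * (v \<bullet> v)"
  have inner: "mat_inner T ((c \<cdot>\<^sub>m 1\<^sub>m n) - vtensor v v)
    = c * (\<Sum>a\<in>I. T $$ (a, a)) - (\<Sum>a\<in>I. \<Sum>b\<in>I. T $$ (a, b) * (v $ a * v $ b))"
    unfolding I_def by (rule inner_expand[OF Tc vc])
  have d1: "(\<Sum>a\<in>I. T $$ (a, a)) = (\<Sum>j\<in>I. t j)"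
  proof -
    have "(\<Sum>a\<in>I. T $$ (a, a)) = (\<Sum>a\<in>I. \<Sum>j\<in>I. U $$ (a, j) * t j * U $$ (a, j))"
      by (intro sum.cong refl) (simp add: Tent I_def)
    also have "\<dots> = (\<Sum>j\<in>I. t j)"
    proof (rule sum_diag)
      fix j assume j: "j \<in> I"
      have UTc: "transpose_mat U \<in> carrier_mat n n" using U by simp
      have "(transpose_mat U * U) $$ (j, j) = (\<Sum>a\<in>{0..<n}. U $$ (a, j) * U $$ (a, j))"
        using j U unfolding I_def by (subst mult_entry[OF UTc U]) auto
      then show "(\<Sum>a\<in>I. U $$ (a, j) * U $$ (a, j)) = 1" using U1 j unfolding I_def by simp
    qed
    finally show ?thesis .
  qed
  have d2: "(\<Sum>a\<in>I. \<Sum>b\<in>I. T $$ (a, b) * (v $ a * v $ b)) = (\<Sum>j\<in>I. t j * (w j)^2)"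
  proof -
    have "(\<Sum>a\<in>I. \<Sum>b\<in>I. T $$ (a, b) * (v $ a * v $ b))
        = (\<Sum>a\<in>I. \<Sum>b\<in>I. (\<Sum>j\<in>I. U $$ (a, j) * t j * U $$ (b, j)) * (v $ a * v $ b))"
      by (intro sum.cong refl) (simp add: Tent I_def)
    also have "\<dots> = (\<Sum>j\<in>I. t j * (w j)^2)" unfolding w_def by (rule sum_quad)
    finally show ?thesis .
  qed
  have vv: "v \<bullet> v = (\<Sum>j\<in>I. (w j)^2)"
  proof -
    have "(\<Sum>j\<in>{0..<n}. (\<Sum>a\<in>{0..<n}. U $$ (a, j) * v $ a)^2) = (\<Sum>a\<in>{0..<n}. v $ a * v $ a)"
    proof (rule sum_norm)
      fix a b assume a: "a < n" and b: "b < n"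
      have UTc: "transpose_mat U \<in> carrier_mat n n" using U by simp
      have "(U * transpose_mat U) $$ (a, b) = (\<Sum>j\<in>{0..<n}. U $$ (a, j) * U $$ (b, j))"
        using a b U by (subst mult_entry[OF U UTc a b]) auto
      then show "(\<Sum>j\<in>{0..<n}. U $$ (a, j) * U $$ (b, j)) = (if a = b then 1 else 0)"
        using U2 a b by simp
    qed
    moreover have "v \<bullet> v = (\<Sum>a\<in>{0..<n}. v $ a * v $ a)" using vc unfolding scalar_prod_def by simp
    ultimately show ?thesis unfolding w_def I_def by simp
  qed
  define s where "s = sigma (k - 1) E"
  have st: "(\<Sum>j\<in>I. t j) = (real n - real (k - 1)) * s"
    unfolding t_def s_def sig using ES_remove_sum[OF fI, of f "k - 1"] cI by simp
  have tb: "real n * t j \<le> real k * (real n - real k + 1) * s" if j: "j \<in> I" for j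
  proof (cases "k = 1")
    case True
    then show ?thesis unfolding t_def s_def sig using ES_0[of "I - {j}" f] ES_0[OF fI, of f] fI by simp
  next
    case False
    then have k2: "2 \<le> k" using k1 by simp
    have pos: "ES I f j' > 0" if "1 \<le> j'" "j' \<le> k" for j'
    proof -
      have "sigma j' E > 0" using assms(5) that unfolding Gamma_plus_def by auto
      then show ?thesis unfolding sig .
    qed
    show ?thesis using main_ineq[OF fI j k2 _ pos] kn cI unfolding t_def s_def sig by simp
  qed
  have n0: "real n > 0" using k1 kn by simp
  have "(\<Sum>j\<in>I. t j * (w j)^2) \<le> (\<Sum>j\<in>I. (real k * (real n - real k + 1) * s / real n) * (w j)^2)"
  proof (rule sum_mono)
    fix j assume j: "j \<in> I"
    have "t j \<le> real k * (real n - real k + 1) * s / real n" using tb[OF j] n0 by (simp add: field_simps)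
    then show "t j * (w j)^2 \<le> (real k * (real n - real k + 1) * s / real n) * (w j)^2"
      by (rule mult_right_mono) simp
  qed
  also have "\<dots> = (real k * (real n - real k + 1) * s / real n) * (v \<bullet> v)"
    unfolding vv by (simp add: sum_distrib_left)
  finally have q: "(\<Sum>j\<in>I. t j * (w j)^2) \<le> (real k * (real n - real k + 1) * s / real n) * (v \<bullet> v)" .
  have LHS: "mat_inner (newton_T k E) ((1/2 * (v \<bullet> v)) \<cdot>\<^sub>m 1\<^sub>m n - vtensor v v)
      = c * ((real n - real (k - 1)) * s) - (\<Sum>j\<in>I. t j * (w j)^2)"
    using inner unfolding T_def[symmetric] c_def[symmetric] d1 d2 st by simp
  have rk: "real n - real (k - 1) = real n - real k + 1" using k1 by (simp add: of_nat_diff)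
  have "(real n - 2 * real k) * (real n - real k + 1) / (2 * real n) * s * (v \<bullet> v)
      = c * ((real n - real k + 1) * s) - (real k * (real n - real k + 1) * s / real n) * (v \<bullet> v)"
    unfolding c_def using n0 by (simp add: field_simps)
  also have "\<dots> \<le> c * ((real n - real k + 1) * s) - (\<Sum>j\<in>I. t j * (w j)^2)" using q by simp
  finally show ?thesis unfolding LHS rk s_def .
qed

end
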